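(* For any $\mu^+_1,\mu^-_1,\mu^+_2,\mu^-_2\in\Lambda^+$ there is a unique $\mathbb{C}(v)$-algebra homomorphism $$\Delta^{\mathrm{rtt}}\colon U^{\mathrm{rtt}}_{-\mu^+_1-\mu^+_2,-\mu^-_1-\mu^-_2}(L\mathfrak{gl}_n)\to U^{\mathrm{rtt}}_{-\mu^+_1,-\mu^-_1}(L\mathfrak{gl}_n)\otimes U^{\mathrm{rtt}}_{-\mu^+_2,-\mu^-_2}(L\mathfrak{gl}_n)$$ with $\Delta^{\mathrm{rtt}}(T^\pm(z))=T^\pm(z)\otimes T^\pm(z)$, i.e. $t^\pm_{ij}(z)\mapsto\sum_{k=1}^nt^\pm_{ik}(z)\otimes t^\pm_{kj}(z)$.
   Context: Let $n\ge2$, $\Lambda=\bigoplus_{j=1}^n\mathbb{Z}\epsilon_j$, $\epsilon^\vee_j$ dual basis, $\alpha^\vee_i=\epsilon^\vee_i-\epsilon^\vee_{i+1}$, $\Lambda^+=\{\nu:\alpha^\vee_i(\nu)\ge0\ \forall 1\le i<n\}$. $R_{\mathrm{trig}}(z,w)=(vz-v^{-1}w)\sum_iE_{ii}\otimes E_{ii}+(z-w)\sum_{i\ne j}E_{ii}\otimes E_{jj}+(v-v^{-1})z\sum_{i<j}E_{ij}\otimes E_{ji}+(v-v^{-1})w\sum_{i>j}E_{ij}\otimes E_{ji}$. For $\mu^\pm\in\Lambda^+$ put $c^\pm_i:=\epsilon^\vee_i(\mu^\pm)$. $U^{\mathrm{rtt}}_{-\mu^+,-\mu^-}(L\mathfrak{gl}_n)$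 is the associative $\mathbb{C}(v)$-algebra generated by $t^\pm_{ij}[\pm r]$ ($1\le i,j\le n$, $r\in\mathbb{Z}$) and elements $(g^\pm_{i,\mp c^\pm_i})^{-1}$ ($1\le i\le n$), with $T^\pm(z)=\sum_{i,j}t^\pm_{ij}(z)\otimes E_{ij}$, $t^\pm_{ij}(z)=\sum_{r\in\mathbb{Z}}t^\pm_{ij}[\pm r]z^{\mp r}$, subject to: (1) $R_{\mathrm{trig}}(z,w)T^\epsilon_1(z)T^{\epsilon'}_2(w)=T^{\epsilon'}_2(w)T^\epsilon_1(z)R_{\mathrm{trig}}(z,w)$ for all $\epsilon,\epsilon'\in\{\pm\}$; (2) the relations expressing that $T^\pm(z)=F^\pm(z)G^\pm(z)E^\pm(z)$ with $F^\pm$ lower unitriangular with entries $f^\pm_{ji}(z)$, $G^\pm=\mathrm{diag}(g^\pm_i(z))$, $E^\pm$ upper unitriangular with entries $e^\pm_{ij}(z)$, where $e^+_{ij}(z)=\sum_{r\ge0}e^{(r)}_{ij}z^{-r}$, $e^-_{ij}(z)=\sum_{r<0}e^{(r)}_{ij}z^{-r}$, $f^+_{ji}(z)=\sum_{r>0}f^{(r)}_{ji}z^{-r}$, $f^-_{ji}(z)=\sum_{r\le0}f^{(r)}_{ji}z^{-r}$, $g^+_i(z)=\sum_{r\ge-c^+_i}g^+_{i,r}z^{-r}$, $g^-_i(z)=\sum_{r\ge-c^-_i}g^-_{i,-r}z^r$, for some elements $e^{(r)}_{ij},f^{(r)}_{ji},g^\pm_{i,\pm r}$ of the algebra; (3)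 $g^\pm_{i,\mp c^\pm_i}(g^\pm_{i,\mp c^\pm_i})^{-1}=(g^\pm_{i,\mp c^\pm_i})^{-1}g^\pm_{i,\mp c^\pm_i}=1$. *)

theory Defs
  imports "HOL-Computational_Algebra.Polynomial" "HOL-Computational_Algebra.Fraction_Field"
begin

type_synonym K = "complex poly fract"

definition vv :: K where "vv = Fract [:0, 1:] 1"

datatype 'x fexpr = Gen 'x | Sc K | Add "'x fexpr" "'x fexpr"
  | Mul "'x fexpr" "'x fexpr" | Neg "'x fexpr"

inductive eqv :: "('x fexpr \<times> 'x fexpr) set \<Rightarrow> 'x fexpr \<Rightarrow> 'x fexpr \<Rightarrow> bool"
  for R where
  rel: "(a, b) \<in> R \<Longrightarrow> eqv R a b"
| refl: "eqv R a a"
| sym: "eqv R a b \<Longrightarrow> eqv R b a"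
| trans: "eqv R a b \<Longrightarrow> eqv R b c \<Longrightarrow> eqv R a c"
| add_cong: "eqv R a a' \<Longrightarrow> eqv R b b' \<Longrightarrow> eqv R (Add a b) (Add a' b')"
| mul_cong: "eqv R a a' \<Longrightarrow> eqv R b b' \<Longrightarrow> eqv R (Mul a b) (Mul a' b')"
| neg_cong: "eqv R a a' \<Longrightarrow> eqv R (Neg a) (Neg a')"
| add_assoc: "eqv R (Add (Add a b) c) (Add a (Add b c))"
| add_comm: "eqv R (Add a b) (Add b a)"
| add_zero: "eqv R (Add a (Sc 0)) a"
| add_neg: "eqv R (Add a (Neg a)) (Sc 0)"
| mul_assoc: "eqv R (Mul (Mul a b) c) (Mul a (Mul b c))"
| mul_one_l: "eqv R (Mul (Sc 1) a) a"
| mul_one_r: "eqv R (Mul a (Sc 1)) a"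
| distr_l: "eqv R (Mul a (Add b c)) (Add (Mul a b) (Mul a c))"
| distr_r: "eqv R (Mul (Add a b) c) (Add (Mul a c) (Mul b c))"
| sc_add: "eqv R (Add (Sc x) (Sc y)) (Sc (x + y))"
| sc_mul: "eqv R (Mul (Sc x) (Sc y)) (Sc (x * y))"
| sc_central: "eqv R (Mul (Sc x) a) (Mul a (Sc x))"

primrec subst :: "('x \<Rightarrow> 'y fexpr) \<Rightarrow> 'x fexpr \<Rightarrow> 'y fexpr" where
  "subst f (Gen x) = f x"
| "subst f (Sc k) = Sc k"
| "subst f (Add a b) = Add (subst f a) (subst f b)"
| "subst f (Mul a b) = Mul (subst f a) (subst f b)"
| "subst f (Neg a) = Neg (subst f a)"

primrec gens :: "'x fexpr \<Rightarrow> 'x set" where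
  "gens (Gen x) = {x}"
| "gens (Sc k) = {}"
| "gens (Add a b) = gens a \<union> gens b"
| "gens (Mul a b) = gens a \<union> gens b"
| "gens (Neg a) = gens a"

definition esum :: "'x fexpr list \<Rightarrow> 'x fexpr" where
  "esum xs = foldr Add xs (Sc 0)"

text \<open>A K-algebra homomorphism from the algebra presented by (X, R) to the one
  presented by (Y, S), given by the images of the generators.\<close>

definition is_hom ::
  "'x set \<Rightarrow> ('x fexpr \<times> 'x fexpr) set \<Rightarrow> 'y set \<Rightarrow> ('y fexpr \<times> 'y fexpr) set
   \<Rightarrow> ('x \<Rightarrow> 'y fexpr) \<Rightarrow> bool" where
  "is_hom X R Y S \<phi> \<longleftrightarrow>
     (\<forall>x\<in>X. gens (\<phi> x) \<subseteq> Y) \<and> (\<forall>(a, b)\<in>R. eqv S (subst \<phi> a) (subst \<phi> b))"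

definition tens_gens :: "'x set \<Rightarrow> 'y set \<Rightarrow> ('x + 'y) set" where
  "tens_gens X Y = Inl ` X \<union> Inr ` Y"

definition tens_rels ::
  "'x set \<Rightarrow> ('x fexpr \<times> 'x fexpr) set \<Rightarrow> 'y set \<Rightarrow> ('y fexpr \<times> 'y fexpr) set
   \<Rightarrow> (('x + 'y) fexpr \<times> ('x + 'y) fexpr) set" where
  "tens_rels X R Y S =
     (\<lambda>(a, b). (map_fexpr Inl a, map_fexpr Inl b)) ` R
   \<union> (\<lambda>(a, b). (map_fexpr Inr a, map_fexpr Inr b)) ` S
   \<union> {(Mul (Gen (Inl x)) (Gen (Inr y)), Mul (Gen (Inr y)) (Gen (Inl x))) | x y. x \<in> X \<and> y \<in> Y}"

text \<open>The boolean is the sign (True = +).  All integer indices m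
  mean "coefficient of z^(-m)":
  TG s i j m = t^s_ij coefficient of z^(-m);
  EG i j r = e^(r)_ij (i<j);  FG j i r = f^(r)_ji (j>i);
  GG s i m = coefficient of z^(-m) in g^s_i(z);
  GI s i = (g^s_{i,-+c^s_i})^(-1).\<close>

datatype gen = TG bool nat nat int | EG nat nat int | FG nat nat int
  | GG bool nat int | GI bool nat

definition dominant :: "nat \<Rightarrow> (nat \<Rightarrow> int) \<Rightarrow> bool" where
  "dominant n c \<longleftrightarrow> (\<forall>i. 1 \<le> i \<and> i < n \<longrightarrow> c (Suc i) \<le> c i)"

definition rtt_gens :: "nat \<Rightarrow> (nat \<Rightarrow> int) \<Rightarrow> (nat \<Rightarrow> int) \<Rightarrow> gen set" where
  "rtt_gens n cp cm =
     {TG s i j m | s i j m. i \<in> {1..n} \<and> j \<in> {1..n}}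
   \<union> {EG i j r | i j r. 1 \<le> i \<and> i < j \<and> j \<le> n}
   \<union> {FG j i r | j i r. 1 \<le> i \<and> i < j \<and> j \<le> n}
   \<union> {GG True i m | i m. i \<in> {1..n} \<and> - cp i \<le> m}
   \<union> {GG False i m | i m. i \<in> {1..n} \<and> m \<le> cm i}
   \<union> {GI s i | s i. i \<in> {1..n}}"

text \<open>Coefficients of z^(-m) of the entries of F^s, G^s, E^s (zero outside the
  prescribed supports; diagonal entries of F, E equal 1).\<close>

definition fco :: "bool \<Rightarrow> nat \<Rightarrow> nat \<Rightarrow> int \<Rightarrow> gen fexpr" where
  "fco s i l m = (if l = i then (if m = 0 then Sc 1 else Sc 0)
     else if l < i \<and> (if s then 0 < m else m \<le> 0) then Gen (FG i l m) else Sc 0)"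

definition eco :: "bool \<Rightarrow> nat \<Rightarrow> nat \<Rightarrow> int \<Rightarrow> gen fexpr" where
  "eco s l j m = (if l = j then (if m = 0 then Sc 1 else Sc 0)
     else if l < j \<and> (if s then 0 \<le> m else m < 0) then Gen (EG l j m) else Sc 0)"

definition gco :: "(nat \<Rightarrow> int) \<Rightarrow> (nat \<Rightarrow> int) \<Rightarrow> bool \<Rightarrow> nat \<Rightarrow> int \<Rightarrow> gen fexpr" where
  "gco cp cm s i m = (if s then (if - cp i \<le> m then Gen (GG True i m) else Sc 0)
     else (if m \<le> cm i then Gen (GG False i m) else Sc 0))"

text \<open>Coefficient of z^(-m) in (F^s G^s E^s)_ij; the box [-N..N]^2 contains all
  (a,b) with nonzero summands.\<close>

definition gauss_coeff ::
  "(nat \<Rightarrow> int) \<Rightarrow> (nat \<Rightarrow> int) \<Rightarrow> bool \<Rightarrow> nat \<Rightarrow> nat \<Rightarrow> int \<Rightarrow> gen fexpr" where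
  "gauss_coeff cp cm s i j m = esum
     [Mul (Mul (fco s i l a) (gco cp cm s l b)) (eco s l j (m - a - b)).
        l \<leftarrow> [1..<Suc (min i j)],
        a \<leftarrow> [- (\<bar>m\<bar> + \<bar>cp l\<bar> + \<bar>cm l\<bar>) .. \<bar>m\<bar> + \<bar>cp l\<bar> + \<bar>cm l\<bar>],
        b \<leftarrow> [- (\<bar>m\<bar> + \<bar>cp l\<bar> + \<bar>cm l\<bar>) .. \<bar>m\<bar> + \<bar>cp l\<bar> + \<bar>cm l\<bar>]]"

text \<open>R_trig(z,w) = sum over (i,j,k,l) of (alpha z + beta w) E_ij (x) E_kl;
  rcoef i j k l = (alpha, beta).\<close>

definition rcoef :: "nat \<Rightarrow> nat \<Rightarrow> nat \<Rightarrow> nat \<Rightarrow> K \<times> K" where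
  "rcoef i j k l =
     (if i = j \<and> k = l then (if i = k then (vv, - inverse vv) else (1, -1))
      else if j = k \<and> l = i \<and> i \<noteq> j then
        (if i < j then (vv - inverse vv, 0) else (0, vv - inverse vv))
      else (0, 0))"

definition tco :: "bool \<Rightarrow> nat \<Rightarrow> nat \<Rightarrow> int \<Rightarrow> gen fexpr" where
  "tco s i j m = Gen (TG s i j m)"

text \<open>Coefficient of z^(-a) w^(-b) in the ((i,k),(j,l)) entry of
  R(z,w) T^s_1(z) T^s'_2(w), resp. T^s'_2(w) T^s_1(z) R(z,w).\<close>

definition rtt_lhs :: "nat \<Rightarrow> bool \<Rightarrow> bool \<Rightarrow> nat \<Rightarrow> nat \<Rightarrow> nat \<Rightarrow> nat \<Rightarrow> int \<Rightarrow> int \<Rightarrow> gen fexpr" where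
  "rtt_lhs n s s' i k j l a b = esum
     [Add (Mul (Sc (fst (rcoef i p k q))) (Mul (tco s p j (a + 1)) (tco s' q l b)))
          (Mul (Sc (snd (rcoef i p k q))) (Mul (tco s p j a) (tco s' q l (b + 1)))).
        p \<leftarrow> [1..<Suc n], q \<leftarrow> [1..<Suc n]]"

definition rtt_rhs :: "nat \<Rightarrow> bool \<Rightarrow> bool \<Rightarrow> nat \<Rightarrow> nat \<Rightarrow> nat \<Rightarrow> nat \<Rightarrow> int \<Rightarrow> int \<Rightarrow> gen fexpr" where
  "rtt_rhs n s s' i k j l a b = esum
     [Add (Mul (Sc (fst (rcoef p j q l))) (Mul (tco s' k q b) (tco s i p (a + 1))))
          (Mul (Sc (snd (rcoef p j q l))) (Mul (tco s' k q (b + 1)) (tco s i p a))).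
        p \<leftarrow> [1..<Suc n], q \<leftarrow> [1..<Suc n]]"

definition rtt_rels :: "nat \<Rightarrow> (nat \<Rightarrow> int) \<Rightarrow> (nat \<Rightarrow> int) \<Rightarrow> (gen fexpr \<times> gen fexpr) set" where
  "rtt_rels n cp cm =
     {(rtt_lhs n s s' i k j l a b, rtt_rhs n s s' i k j l a b) | s s' i k j l a b.
        i \<in> {1..n} \<and> k \<in> {1..n} \<and> j \<in> {1..n} \<and> l \<in> {1..n}}
   \<union> {(Gen (TG s i j m), gauss_coeff cp cm s i j m) | s i j m. i \<in> {1..n} \<and> j \<in> {1..n}}
   \<union> {(Mul (Gen (GG True i (- cp i))) (Gen (GI True i)), Sc 1) | i. i \<in> {1..n}}
   \<union> {(Mul (Gen (GI True i)) (Gen (GG True i (- cp i))), Sc 1) | i. i \<in> {1..n}}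
   \<union> {(Mul (Gen (GG False i (cm i))) (Gen (GI False i)), Sc 1) | i. i \<in> {1..n}}
   \<union> {(Mul (Gen (GI False i)) (Gen (GG False i (cm i))), Sc 1) | i. i \<in> {1..n}}"

text \<open>The coproduct condition Delta(t^s_ij[m]) = sum_k sum_r t^s_ik[r] (x) t^s_kj[m-r]
  (infinite sum in r, interpreted as: partial sums over [-N..N] eventually equal).\<close>

definition delta_cond ::
  "nat \<Rightarrow> ((gen + gen) fexpr \<times> (gen + gen) fexpr) set \<Rightarrow> (gen \<Rightarrow> (gen + gen) fexpr) \<Rightarrow> bool" where
  "delta_cond n S \<phi> \<longleftrightarrow>
     (\<forall>s i j m. i \<in> {1..n} \<and> j \<in> {1..n} \<longrightarrow>
        (\<exists>N0::int. \<forall>N\<ge>N0. eqv S (\<phi> (TG s i j m))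
           (esum [Mul (Gen (Inl (TG s i k r))) (Gen (Inr (TG s k j (m - r)))).
                    k \<leftarrow> [1..<Suc n], r \<leftarrow> [-N..N]])))"

end

theory Submission
  imports Defs "HOL-Computational_Algebra.Formal_Laurent_Series"
begin

unbundle fps_syntax


lemma eqv_mono: "eqv R a b \<Longrightarrow> R \<subseteq> R' \<Longrightarrow> eqv R' a b"
  by (induction rule: eqv.induct) (auto intro: eqv.intros)

lemma eqv_subst:
  assumes "eqv R a b" "\<And>x y. (x, y) \<in> R \<Longrightarrow> eqv R' (subst f x) (subst f y)"
  shows "eqv R' (subst f a) (subst f b)"
  using assms by (induction rule: eqv.induct) (auto intro: eqv.intros)

lemma equivp_eqv: "equivp (eqv R)"
  by (rule equivpI) (auto simp: reflp_def symp_def transp_def intro: eqv.intros)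

primrec ev :: "(K \<Rightarrow> 'a::ring_1) \<Rightarrow> ('x \<Rightarrow> 'a) \<Rightarrow> 'x fexpr \<Rightarrow> 'a" where
  "ev s w (Gen x) = w x"
| "ev s w (Sc k) = s k"
| "ev s w (Add a b) = ev s w a + ev s w b"
| "ev s w (Mul a b) = ev s w a * ev s w b"
| "ev s w (Neg a) = - ev s w a"

definition schom :: "(K \<Rightarrow> 'a::ring_1) \<Rightarrow> bool" where
  "schom s \<longleftrightarrow> (\<forall>x y. s (x + y) = s x + s y) \<and> (\<forall>x y. s (x * y) = s x * s y)
     \<and> s 0 = 0 \<and> s 1 = 1 \<and> (\<forall>k a. s k * a = a * s k)"

lemma schomD:
  assumes "schom s"
  shows "s (x + y) = s x + s y" "s (x * y) = s x * s y" "s 0 = 0" "s 1 = 1" "s k * a = a * s k"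
  using assms unfolding schom_def by blast+

lemma ev_sound:
  assumes "eqv R a b" "\<And>x y. (x, y) \<in> R \<Longrightarrow> ev s w x = ev s w y" "schom s"
  shows "ev s w a = ev s w b"
  using assms(1)
proof (induction rule: eqv.induct)
  case (rel a b) then show ?case by (rule assms(2))
next
  case (add_assoc a b c) then show ?case by (simp add: add.assoc)
next
  case (add_comm a b) then show ?case by (simp add: add.commute)
next
  case (mul_assoc a b c) then show ?case by (simp add: mult.assoc)
next
  case (distr_l a b c) then show ?case by (simp add: distrib_left)
next
  case (distr_r a b c) then show ?case by (simp add: distrib_right)
next
  case (add_zero a) then show ?case using schomD(3)[OF assms(3)] by simp
next
  case (add_neg a) then show ?case using schomD(3)[OF assms(3)] by simp
next
  case (mul_one_l a) then show ?case using schomD(4)[OF assms(3)] by simp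
next
  case (mul_one_r a) then show ?case using schomD(4)[OF assms(3)] by simp
next
  case (sc_add x y) then show ?case using schomD(1)[OF assms(3)] by simp
next
  case (sc_mul x y) then show ?case using schomD(2)[OF assms(3)] by simp
next
  case (sc_central x a) then show ?case using schomD(5)[OF assms(3)] by simp
next
  case (sym a b) then show ?case by simp
next
  case (trans a b c) then show ?case by simp
qed simp_all

lemma schom_id: "schom (\<lambda>k::K. k)"
  unfolding schom_def by (simp add: mult.commute)

lemma not_eqv01: "\<not> eqv {} (Sc 0) (Sc 1 :: 'x fexpr)"
proof
  assume "eqv {} (Sc 0) (Sc 1 :: 'x fexpr)"
  from ev_sound[OF this _ schom_id, of "\<lambda>_. 0"]
  have "(0::K) = 1" by simp
  then show False by (rule zero_neq_one[THEN notE])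
qed

lemma ev_subst: "ev s w (subst f a) = ev s (\<lambda>x. ev s w (f x)) a"
  by (induction a) auto

lemma ev_map: "ev s w (map_fexpr g a) = ev s (\<lambda>x. w (g x)) a"
  by (induction a) auto

lemma ev_cong: "(\<And>x. x \<in> gens a \<Longrightarrow> w x = w' x) \<Longrightarrow> ev s w a = ev s w' a"
  by (induction a) auto

lemma ev_hom:
  assumes "\<And>x y. h (x + y) = h x + h y" "\<And>x y. h (x * y) = h x * h y" "\<And>x. h (- x) = - h x"
    "\<And>k. h (s k) = s' k"
  shows "ev s' (\<lambda>x. h (w x)) a = h (ev s w a)"
  by (induction a) (auto simp: assms)

lemma ev_esum: "s 0 = 0 \<Longrightarrow> ev s w (esum xs) = sum_list (map (ev s w) xs)"
  by (induction xs) (auto simp: esum_def)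

quotient_type 'x falg = "'x fexpr" / "eqv {}"
  by (rule equivp_eqv)

instantiation falg :: (type) ring_1
begin
lift_definition zero_falg :: "'a falg" is "Sc 0" .
lift_definition one_falg :: "'a falg" is "Sc 1" .
lift_definition plus_falg :: "'a falg \<Rightarrow> 'a falg \<Rightarrow> 'a falg" is Add by (rule eqv.add_cong)
lift_definition times_falg :: "'a falg \<Rightarrow> 'a falg \<Rightarrow> 'a falg" is Mul by (rule eqv.mul_cong)
lift_definition uminus_falg :: "'a falg \<Rightarrow> 'a falg" is Neg by (rule eqv.neg_cong)
lift_definition minus_falg :: "'a falg \<Rightarrow> 'a falg \<Rightarrow> 'a falg" is "\<lambda>a b. Add a (Neg b)"
  by (intro eqv.add_cong eqv.neg_cong)
instance
proof
  fix a b c :: "'a falg"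
  show "a + b + c = a + (b + c)" by transfer (rule eqv.add_assoc)
  show "a + b = b + a" by transfer (rule eqv.add_comm)
  show "0 + a = a" by transfer (meson eqv.add_comm eqv.add_zero eqv.trans)
  show "- a + a = 0" by transfer (meson eqv.add_comm eqv.add_neg eqv.trans)
  show "a - b = a + - b" by transfer (rule eqv.refl)
  show "a * b * c = a * (b * c)" by transfer (rule eqv.mul_assoc)
  show "(a + b) * c = a * c + b * c" by transfer (rule eqv.distr_r)
  show "a * (b + c) = a * b + a * c" by transfer (rule eqv.distr_l)
  show "1 * a = a" by transfer (rule eqv.mul_one_l)
  show "a * 1 = a" by transfer (rule eqv.mul_one_r)
  show "(0::'a falg) \<noteq> 1" by transfer (rule not_eqv01)
qed
end


definition md :: "'r::ring_1 set \<Rightarrow> 'r \<Rightarrow> 'r \<Rightarrow> bool" where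
  "md I x y \<longleftrightarrow> x - y \<in> I"

locale ridl =
  fixes I :: "'r::ring_1 set"
  assumes zero_in: "0 \<in> I"
    and add_in: "x \<in> I \<Longrightarrow> y \<in> I \<Longrightarrow> x + y \<in> I"
    and neg_in: "x \<in> I \<Longrightarrow> - x \<in> I"
    and lmul_in: "x \<in> I \<Longrightarrow> a * x \<in> I"
    and rmul_in: "x \<in> I \<Longrightarrow> x * a \<in> I"
begin

lemma diff_in: "x \<in> I \<Longrightarrow> y \<in> I \<Longrightarrow> x - y \<in> I"
  using add_in[of x "-y"] neg_in[of y] by simp

lemma sum_in: "(\<And>i. i \<in> A \<Longrightarrow> f i \<in> I) \<Longrightarrow> sum f A \<in> I"
  by (induction A rule: infinite_finite_induct) (auto intro: zero_in add_in)

lemma md_refl[simp]: "md I x x" by (simp add: md_def zero_in)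
lemma md_eq: "x = y \<Longrightarrow> md I x y" by simp
lemma md_sym: "md I x y \<Longrightarrow> md I y x"
  unfolding md_def using neg_in[of "x-y"] by simp
lemma md_trans[trans]: "md I x y \<Longrightarrow> md I y z \<Longrightarrow> md I x z"
  unfolding md_def using add_in[of "x-y" "y-z"] by simp
lemma md_trans_eq1[trans]: "x = y \<Longrightarrow> md I y z \<Longrightarrow> md I x z" by simp
lemma md_trans_eq2[trans]: "md I x y \<Longrightarrow> y = z \<Longrightarrow> md I x z" by simp
lemma md_add: "md I x x' \<Longrightarrow> md I y y' \<Longrightarrow> md I (x + y) (x' + y')"
  unfolding md_def using add_in[of "x-x'" "y-y'"] by (simp add: algebra_simps)
lemma md_uminus: "md I x x' \<Longrightarrow> md I (- x) (- x')"
  unfolding md_def using neg_in[of "x-x'"] by (simp add: algebra_simps)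
lemma md_diff: "md I x x' \<Longrightarrow> md I y y' \<Longrightarrow> md I (x - y) (x' - y')"
  using md_add[of x x' "-y" "-y'"] md_uminus[of y y'] by simp
lemma md_mult: "md I x x' \<Longrightarrow> md I y y' \<Longrightarrow> md I (x * y) (x' * y')"
proof -
  assume a: "md I x x'" "md I y y'"
  have "x * y - x' * y' = (x - x') * y + x' * (y - y')" by (simp add: algebra_simps)
  moreover have "(x - x') * y \<in> I" "x' * (y - y') \<in> I"
    using a rmul_in lmul_in unfolding md_def by auto
  ultimately show ?thesis using add_in unfolding md_def by metis
qed
lemma md_multl: "md I y y' \<Longrightarrow> md I (x * y) (x * y')" by (rule md_mult) simp_all
lemma md_multr: "md I x x' \<Longrightarrow> md I (x * y) (x' * y)" by (rule md_mult) simp_all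
lemma md_sum: "(\<And>i. i \<in> A \<Longrightarrow> md I (f i) (g i)) \<Longrightarrow> md I (sum f A) (sum g A)"
  unfolding md_def by (simp add: sum_subtractf[symmetric] sum_in)
lemma md_zero_iff: "md I x 0 \<longleftrightarrow> x \<in> I" by (simp add: md_def)
lemma md_in_iff: "md I x y \<longleftrightarrow> x - y \<in> I" by (simp add: md_def)

end

definition scalF :: "K \<Rightarrow> 'x falg" where "scalF k = abs_falg (Sc k)"
definition genF :: "'x \<Rightarrow> 'x falg" where "genF x = abs_falg (Gen x)"

lemma abs_ev: "abs_falg a = ev scalF genF a"
proof (induction a)
  case (Add a b) then show ?case by (simp add: plus_falg.abs_eq[symmetric])
next
  case (Mul a b) then show ?case by (simp add: times_falg.abs_eq[symmetric])
next
  case (Neg a) then show ?case by (simp add: uminus_falg.abs_eq[symmetric])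
qed (simp_all add: scalF_def genF_def)

lemma schom_scalF: "schom scalF"
proof -
  have 1: "scalF (x + y) = scalF x + scalF y" for x y
    unfolding scalF_def plus_falg.abs_eq falg.abs_eq_iff by (rule eqv.sym[OF eqv.sc_add])
  have 2: "scalF (x * y) = scalF x * scalF y" for x y
    unfolding scalF_def times_falg.abs_eq falg.abs_eq_iff by (rule eqv.sym[OF eqv.sc_mul])
  have 3: "scalF k * a = a * scalF k" for k a
    unfolding scalF_def by transfer (rule eqv.sc_central)
  show ?thesis unfolding schom_def
    by (intro conjI allI 1 2 3) (simp_all add: scalF_def zero_falg_def one_falg_def)
qed

lemma eqv_empty_mono: "eqv {} a b \<Longrightarrow> eqv R a b"
  by (erule eqv_mono) simp

lift_definition inZ :: "('x fexpr \<times> 'x fexpr) set \<Rightarrow> 'x falg \<Rightarrow> bool" is "\<lambda>R a. eqv R a (Sc 0)"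
  by (meson eqv.sym eqv.trans eqv_empty_mono)

definition ZS :: "('x fexpr \<times> 'x fexpr) set \<Rightarrow> 'x falg set" where "ZS R = Collect (inZ R)"

lemma falg_ring_eqv: "abs_falg a = abs_falg b \<Longrightarrow> eqv R a b"
  by (simp add: falg.abs_eq_iff eqv_empty_mono)

lemma inZ_abs: "inZ R (abs_falg a) \<longleftrightarrow> eqv R a (Sc 0)"
  by (simp add: inZ.abs_eq)

lemma inZ_add: "inZ R x \<Longrightarrow> inZ R y \<Longrightarrow> inZ R (x + y)"
  by transfer (rule eqv.trans[OF eqv.add_cong eqv.add_zero])

lemma inZ_neg: "inZ R x \<Longrightarrow> inZ R (- x)"
proof (induction x rule: falg.abs_induct)
  case (1 a)
  have "abs_falg (Neg (Sc 0)) = (abs_falg (Sc 0) :: 'a falg)"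
    by (simp add: uminus_falg.abs_eq[symmetric] zero_falg_def[symmetric])
  then have e: "eqv R (Neg (Sc 0)) (Sc 0)" by (rule falg_ring_eqv)
  from 1 have "eqv R a (Sc 0)" by (simp add: inZ_abs)
  then have "eqv R (Neg a) (Sc 0)" by (rule eqv.trans[OF eqv.neg_cong e])
  then show ?case by (simp add: uminus_falg.abs_eq inZ_abs)
qed

lemma inZ_lmul: "inZ R x \<Longrightarrow> inZ R (y * x)"
proof (induction x rule: falg.abs_induct)
  case (1 a)
  show ?case
  proof (induction y rule: falg.abs_induct)
    case (1 b)
    have "abs_falg (Mul b (Sc 0)) = (abs_falg (Sc 0) :: 'a falg)"
      by (simp add: times_falg.abs_eq[symmetric] zero_falg_def[symmetric])
    then have e: "eqv R (Mul b (Sc 0)) (Sc 0)" by (rule falg_ring_eqv)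
    from \<open>inZ R (abs_falg a)\<close> have "eqv R a (Sc 0)" by (simp add: inZ_abs)
    then have "eqv R (Mul b a) (Sc 0)" by (rule eqv.trans[OF eqv.mul_cong[OF eqv.refl] e])
    then show ?case by (simp add: times_falg.abs_eq inZ_abs)
  qed
qed

lemma inZ_rmul: "inZ R x \<Longrightarrow> inZ R (x * y)"
proof (induction x rule: falg.abs_induct)
  case (1 a)
  show ?case
  proof (induction y rule: falg.abs_induct)
    case (1 b)
    have "abs_falg (Mul (Sc 0) b) = (abs_falg (Sc 0) :: 'a falg)"
      by (simp add: times_falg.abs_eq[symmetric] zero_falg_def[symmetric])
    then have e: "eqv R (Mul (Sc 0) b) (Sc 0)" by (rule falg_ring_eqv)
    from \<open>inZ R (abs_falg a)\<close> have "eqv R a (Sc 0)" by (simp add: inZ_abs)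
    then have "eqv R (Mul a b) (Sc 0)" by (rule eqv.trans[OF eqv.mul_cong[OF _ eqv.refl] e])
    then show ?case by (simp add: times_falg.abs_eq inZ_abs)
  qed
qed

lemma ridl_ZS: "ridl (ZS R)"
  by unfold_locales (auto simp: ZS_def zero_falg_def inZ_abs eqv.refl inZ_add inZ_neg inZ_lmul inZ_rmul)

lemma md_abs_iff: "md (ZS R) (abs_falg a) (abs_falg b) \<longleftrightarrow> eqv R a b"
proof -
  have e1: "abs_falg a - abs_falg b = abs_falg (Add a (Neg b))"
    by (simp add: minus_falg.abs_eq)
  have "eqv R (Add a (Neg b)) (Sc 0) \<longleftrightarrow> eqv R a b"
  proof
    assume h: "eqv R (Add a (Neg b)) (Sc 0)"
    have "(abs_falg (Add (Add a (Neg b)) b) :: 'a falg) = abs_falg a + - abs_falg b + abs_falg b"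
      by (simp only: plus_falg.abs_eq uminus_falg.abs_eq)
    then have "abs_falg a = (abs_falg (Add (Add a (Neg b)) b) :: 'a falg)" by simp
    then have "eqv R a (Add (Add a (Neg b)) b)" by (rule falg_ring_eqv)
    moreover have "eqv R (Add (Add a (Neg b)) b) (Add (Sc 0) b)"
      using h by (intro eqv.add_cong eqv.refl)
    moreover have "abs_falg (Add (Sc 0) b) = (abs_falg b :: 'a falg)"
      by (simp add: plus_falg.abs_eq[symmetric] zero_falg_def[symmetric])
    ultimately show "eqv R a b" using falg_ring_eqv eqv.trans by blast
  next
    assume h: "eqv R a b"
    have "eqv R (Add a (Neg b)) (Add b (Neg b))" using h by (intro eqv.add_cong eqv.refl)
    then show "eqv R (Add a (Neg b)) (Sc 0)" by (rule eqv.trans[OF _ eqv.add_neg])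
  qed
  then show ?thesis unfolding md_def ZS_def using e1 by (simp add: inZ_abs)
qed

definition clean :: "'x set \<Rightarrow> 'x \<Rightarrow> 'x fexpr" where
  "clean Y g = (if g \<in> Y then Gen g else Sc 0)"

lemma subst_clean_id: "gens a \<subseteq> Y \<Longrightarrow> subst (clean Y) a = a"
  by (induction a) (auto simp: clean_def)

lemma gens_subst_clean: "gens (subst (clean Y) a) \<subseteq> Y"
  by (induction a) (auto simp: clean_def)

lift_definition kap :: "'x set \<Rightarrow> 'x falg \<Rightarrow> 'x falg" is "\<lambda>Y a. subst (clean Y) a"
  by (erule eqv_subst) simp

lemma kap_add: "kap Y (x + y) = kap Y x + kap Y y" by transfer (simp add: eqv.refl)
lemma kap_mult: "kap Y (x * y) = kap Y x * kap Y y" by transfer (simp add: eqv.refl)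
lemma kap_uminus: "kap Y (- x) = - kap Y x" by transfer (simp add: eqv.refl)
lemma kap_scalF: "kap Y (scalF k) = scalF k" unfolding scalF_def by transfer (simp add: eqv.refl)
lemma kap_genF: "x \<in> Y \<Longrightarrow> kap Y (genF x) = genF x" unfolding genF_def by transfer (simp add: clean_def eqv.refl)
lemma kap_abs: "kap Y (abs_falg a) = abs_falg (subst (clean Y) a)" by (simp add: kap.abs_eq)
lemma kap_abs_id: "gens a \<subseteq> Y \<Longrightarrow> kap Y (abs_falg a) = abs_falg a" by (simp add: kap_abs subst_clean_id)
lemma kap_diff: "kap Y (x - y) = kap Y x - kap Y y"
  by (metis diff_conv_add_uminus kap_add kap_uminus)

lemma kap_ZS:
  assumes a: "\<And>a b. (a, b) \<in> R \<Longrightarrow> gens a \<subseteq> Y \<and> gens b \<subseteq> Y"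
  shows "x \<in> ZS R \<Longrightarrow> kap Y x \<in> ZS R"
proof (induction x rule: falg.abs_induct)
  case (1 x)
  then have h': "eqv R x (Sc 0)" by (simp add: ZS_def inZ_abs)
  have "eqv R (subst (clean Y) x) (subst (clean Y) (Sc 0))"
  proof (rule eqv_subst[OF h'])
    fix u v assume "(u, v) \<in> R"
    then show "eqv R (subst (clean Y) u) (subst (clean Y) v)"
      using a[of u v] by (simp add: subst_clean_id eqv.rel)
  qed
  then show ?case by (simp add: ZS_def inZ_abs kap_abs)
qed

lemma kap_md:
  assumes "\<And>a b. (a, b) \<in> R \<Longrightarrow> gens a \<subseteq> Y \<and> gens b \<subseteq> Y"
  shows "md (ZS R) x y \<Longrightarrow> md (ZS R) (kap Y x) (kap Y y)"
  unfolding md_def by (metis kap_diff kap_ZS[OF assms])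


definition lowb :: "'a::zero fls \<Rightarrow> int \<Rightarrow> bool" where
  "lowb f d \<longleftrightarrow> (\<forall>m<d. f $$ m = 0)"

lemma lowbD: "lowb f d \<Longrightarrow> m < d \<Longrightarrow> f $$ m = 0" by (simp add: lowb_def)
lemma lowbI: "(\<And>m. m < d \<Longrightarrow> f $$ m = 0) \<Longrightarrow> lowb f d" by (simp add: lowb_def)
lemma lowb_mono: "lowb f d \<Longrightarrow> d' \<le> d \<Longrightarrow> lowb f d'" by (simp add: lowb_def)
lemma lowb_0[simp]: "lowb 0 d" by (simp add: lowb_def)
lemma lowb_1: "d \<le> 0 \<Longrightarrow> lowb (1::'a::{zero,one} fls) d" by (simp add: lowb_def)
lemma lowb_const: "d \<le> 0 \<Longrightarrow> lowb (fls_const c) d" by (simp add: lowb_def)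
lemma lowb_add: "lowb f d \<Longrightarrow> lowb g d \<Longrightarrow> lowb (f + g) (d::int)"
  by (simp add: lowb_def)
lemma lowb_diff: "lowb f d \<Longrightarrow> lowb g d \<Longrightarrow> lowb (f - g :: 'a::group_add fls) d"
  by (simp add: lowb_def)
lemma lowb_uminus: "lowb f d \<Longrightarrow> lowb (- f :: 'a::group_add fls) d"
  by (simp add: lowb_def)
lemma lowb_sum: "(\<And>i. i \<in> A \<Longrightarrow> lowb (f i) d) \<Longrightarrow> lowb (sum f A :: 'a::comm_monoid_add fls) d"
  by (induction A rule: infinite_finite_induct) (auto intro: lowb_add)
lemma lowb_Abs: "(\<And>m. m < d \<Longrightarrow> f m = 0) \<Longrightarrow> lowb (Abs_fls f) d"
  unfolding lowb_def by (subst nth_Abs_fls_lower_bound) auto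

lemma fls_mult_nth_superset:
  fixes f g :: "'a::ring_1 fls"
  assumes "finite W" "\<And>i. f $$ i \<noteq> 0 \<Longrightarrow> g $$ (n - i) \<noteq> 0 \<Longrightarrow> i \<in> W"
  shows "(f * g) $$ n = (\<Sum>i\<in>W. f $$ i * g $$ (n - i))"
proof -
  let ?h = "\<lambda>i. f $$ i * g $$ (n - i)"
  let ?V = "{fls_subdegree f..n - fls_subdegree g}"
  have 1: "(f * g) $$ n = sum ?h ?V" by (rule fls_times_nth(2))
  have "sum ?h ?V = sum ?h (?V \<inter> W)"
  proof (rule sum.mono_neutral_right)
    show "\<forall>i\<in>?V - ?V \<inter> W. ?h i = 0"
    proof
      fix i assume "i \<in> ?V - ?V \<inter> W"
      then have "i \<notin> W" by blast
      then have "f $$ i = 0 \<or> g $$ (n - i) = 0" using assms(2) by blast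
      then show "?h i = 0" by auto
    qed
  qed auto
  also have "\<dots> = sum ?h W"
  proof (rule sum.mono_neutral_left[OF assms(1)])
    show "\<forall>i\<in>W - ?V \<inter> W. ?h i = 0"
    proof
      fix i assume "i \<in> W - ?V \<inter> W"
      then have "i < fls_subdegree f \<or> n - i < fls_subdegree g" by auto
      then show "?h i = 0" by auto
    qed
  qed auto
  finally show ?thesis using 1 by simp
qed

lemma fls_mult_nth_window:
  fixes f g :: "'a::ring_1 fls"
  assumes "lowb f A" "lowb g B" "{A..n - B} \<subseteq> W" "finite W"
  shows "(f * g) $$ n = (\<Sum>i\<in>W. f $$ i * g $$ (n - i))"
proof (rule fls_mult_nth_superset[OF assms(4)])
  fix i assume "f $$ i \<noteq> 0" "g $$ (n - i) \<noteq> 0"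
  then have "A \<le> i" "B \<le> n - i" using assms(1,2) by (auto simp: lowb_def not_less[symmetric])
  then show "i \<in> W" using assms(3) by auto
qed

lemma lowb_mult:
  fixes f g :: "'a::ring_1 fls"
  assumes "lowb f a" "lowb g b"
  shows "lowb (f * g) (a + b)"
proof (rule lowbI)
  fix m assume "m < a + b"
  then have "{a..m - b} = {}" by auto
  then show "(f * g) $$ m = 0" using fls_mult_nth_window[OF assms, of m "{}"] by simp
qed

lemma fls_mult_lowest:
  fixes f g :: "'a::ring_1 fls"
  assumes "lowb f a" "lowb g b"
  shows "(f * g) $$ (a + b) = f $$ a * g $$ b"
  using fls_mult_nth_window[OF assms, of "a + b" "{a}"] by simp

definition flsI :: "'a::ring_1 set \<Rightarrow> 'a fls set" where
  "flsI I = {f. \<forall>m. f $$ m \<in> I}"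

lemma (in ridl) ridl_flsI: "ridl (flsI I)"
proof
  show "0 \<in> flsI I" by (simp add: flsI_def zero_in)
next
  fix x y assume "x \<in> flsI I" "y \<in> flsI I" then show "x + y \<in> flsI I"
    by (simp add: flsI_def add_in)
next
  fix x assume "x \<in> flsI I" then show "- x \<in> flsI I" by (simp add: flsI_def neg_in)
next
  fix x a assume h: "x \<in> flsI I"
  show "a * x \<in> flsI I" unfolding flsI_def
  proof (intro CollectI allI)
    fix m show "(a * x) $$ m \<in> I" unfolding fls_times_nth(2)
      using h by (auto simp: flsI_def intro!: sum_in lmul_in)
  qed
next
  fix x a assume h: "x \<in> flsI I"
  show "x * a \<in> flsI I" unfolding flsI_def
  proof (intro CollectI allI)
    fix m show "(x * a) $$ m \<in> I" unfolding fls_times_nth(2)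
      using h by (auto simp: flsI_def intro!: sum_in rmul_in)
  qed
qed

lemma md_flsI: "md (flsI I) f g \<longleftrightarrow> (\<forall>m. md I (f $$ m) (g $$ m))"
  by (simp add: md_def flsI_def)

fun rinv_c :: "(nat \<Rightarrow> 'a::ring_1) \<Rightarrow> 'a \<Rightarrow> nat \<Rightarrow> 'a" where
  "rinv_c a x 0 = x"
| "rinv_c a x (Suc n) = - x * (\<Sum>i\<in>{1..Suc n}. a i * rinv_c a x (Suc n - i))"

fun linv_c :: "(nat \<Rightarrow> 'a::ring_1) \<Rightarrow> 'a \<Rightarrow> nat \<Rightarrow> 'a" where
  "linv_c a x 0 = x"
| "linv_c a x (Suc n) = - (\<Sum>i\<in>{0..n}. linv_c a x i * a (Suc n - i)) * x"

definition finvR :: "'a::ring_1 fls \<Rightarrow> int \<Rightarrow> 'a \<Rightarrow> 'a fls" where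
  "finvR f d x = Abs_fls (\<lambda>m. if m < -d then 0 else rinv_c (\<lambda>i. f $$ (d + int i)) x (nat (m + d)))"

definition finvL :: "'a::ring_1 fls \<Rightarrow> int \<Rightarrow> 'a \<Rightarrow> 'a fls" where
  "finvL f d x = Abs_fls (\<lambda>m. if m < -d then 0 else linv_c (\<lambda>i. f $$ (d + int i)) x (nat (m + d)))"

lemma finvR_nth: "finvR f d x $$ m = (if m < -d then 0 else rinv_c (\<lambda>i. f $$ (d + int i)) x (nat (m + d)))"
  unfolding finvR_def by (rule nth_Abs_fls_lower_bound[of "-d"]) auto

lemma finvL_nth: "finvL f d x $$ m = (if m < -d then 0 else linv_c (\<lambda>i. f $$ (d + int i)) x (nat (m + d)))"
  unfolding finvL_def by (rule nth_Abs_fls_lower_bound[of "-d"]) auto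

lemma lowb_finvR: "lowb (finvR f d x) (-d)" by (simp add: lowb_def finvR_nth)
lemma lowb_finvL: "lowb (finvL f d x) (-d)" by (simp add: lowb_def finvL_nth)
lemma finvR_lead: "finvR f d x $$ (-d) = x" by (simp add: finvR_nth)

lemma sum_int_shift:
  fixes d :: int and N :: nat
  shows "(\<Sum>i\<in>{d..d + int N}. h i) = (\<Sum>j\<in>{0..N}. h (d + int j))"
proof -
  have "{d..d + int N} = (\<lambda>j. d + int j) ` {0..N}"
  proof
    show "{d..d + int N} \<subseteq> (\<lambda>j. d + int j) ` {0..N}"
    proof
      fix i assume "i \<in> {d..d + int N}"
      then have "i = d + int (nat (i - d))" "nat (i - d) \<in> {0..N}" by auto
      then show "i \<in> (\<lambda>j. d + int j) ` {0..N}" by blast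
    qed
  qed auto
  moreover have "inj_on (\<lambda>j. d + int j) {0..N}" by (auto simp: inj_on_def)
  ultimately show ?thesis by (simp add: sum.reindex)
qed

context ridl
begin

lemma finvR_right:
  assumes f: "lowb f d" and x: "md I (f $$ d * x) 1"
  shows "md (flsI I) (f * finvR f d x) 1"
  unfolding md_flsI
proof
  fix n
  let ?a = "\<lambda>i. f $$ (d + int i)" and ?c = "rinv_c (\<lambda>i. f $$ (d + int i)) x"
  show "md I ((f * finvR f d x) $$ n) (1 $$ n)"
  proof (cases "n < 0")
    case True
    have "(f * finvR f d x) $$ n = 0"
      using lowb_mult[OF f lowb_finvR[of f d x]] True by (simp add: lowb_def)
    then show ?thesis using True by simp
  next
    case False
    define N where "N = nat n"
    have nN: "n = int N" using False N_def by simp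
    have "(f * finvR f d x) $$ n = (\<Sum>i\<in>{d..d + int N}. f $$ i * finvR f d x $$ (n - i))"
      by (rule fls_mult_nth_window[OF f lowb_finvR]) (auto simp: nN)
    also have "\<dots> = (\<Sum>j\<in>{0..N}. ?a j * ?c (N - j))"
      by (simp add: sum_int_shift finvR_nth nN) (intro sum.cong refl, auto simp: nat_diff_distrib)
    finally have e: "(f * finvR f d x) $$ n = (\<Sum>j\<in>{0..N}. ?a j * ?c (N - j))" .
    show ?thesis
    proof (cases N)
      case 0
      then show ?thesis using e x nN by simp
    next
      case (Suc M)
      let ?S = "\<Sum>i\<in>{1..Suc M}. ?a i * ?c (Suc M - i)"
      have "{0..Suc M} = insert 0 {1..Suc M}" by auto
      then have "(\<Sum>j\<in>{0..N}. ?a j * ?c (N - j)) = ?a 0 * ?c (Suc M) + ?S"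
        using Suc by simp
      also have "\<dots> = - ((f $$ d * x - 1) * ?S)" by (simp add: algebra_simps)
      finally have "(f * finvR f d x) $$ n = - ((f $$ d * x - 1) * ?S)" using e by simp
      moreover have "- ((f $$ d * x - 1) * ?S) \<in> I"
        using x unfolding md_def by (intro neg_in rmul_in)
      ultimately show ?thesis using nN Suc by (simp add: md_def)
    qed
  qed
qed

lemma finvL_left:
  assumes f: "lowb f d" and x: "md I (x * f $$ d) 1"
  shows "md (flsI I) (finvL f d x * f) 1"
  unfolding md_flsI
proof
  fix n
  let ?a = "\<lambda>i. f $$ (d + int i)" and ?c = "linv_c (\<lambda>i. f $$ (d + int i)) x"
  show "md I ((finvL f d x * f) $$ n) (1 $$ n)"
  proof (cases "n < 0")
    case True
    have "(finvL f d x * f) $$ n = 0"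
      using lowb_mult[OF lowb_finvL[of f d x] f] True by (simp add: lowb_def)
    then show ?thesis using True by simp
  next
    case False
    define N where "N = nat n"
    have nN: "n = int N" using False N_def by simp
    have "(finvL f d x * f) $$ n = (\<Sum>i\<in>{-d..-d + int N}. finvL f d x $$ i * f $$ (n - i))"
      by (rule fls_mult_nth_window[OF lowb_finvL f]) (auto simp: nN)
    also have "\<dots> = (\<Sum>j\<in>{0..N}. ?c j * ?a (N - j))"
      unfolding sum_int_shift by (simp add: finvL_nth nN) (intro sum.cong refl, auto simp: of_nat_diff algebra_simps)
    finally have e: "(finvL f d x * f) $$ n = (\<Sum>j\<in>{0..N}. ?c j * ?a (N - j))" .
    show ?thesis
    proof (cases N)
      case 0
      then show ?thesis using e x nN by simp
    next
      case (Suc M)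
      let ?S = "\<Sum>i\<in>{0..M}. ?c i * ?a (Suc M - i)"
      have "{0..Suc M} = insert (Suc M) {0..M}" by auto
      then have "(\<Sum>j\<in>{0..N}. ?c j * ?a (N - j)) = ?c (Suc M) * ?a 0 + ?S"
        using Suc by simp
      also have "\<dots> = - (?S * (x * f $$ d - 1))" by (simp add: algebra_simps)
      finally have "(finvL f d x * f) $$ n = - (?S * (x * f $$ d - 1))" using e by simp
      moreover have "- (?S * (x * f $$ d - 1)) \<in> I"
        using x unfolding md_def by (intro neg_in lmul_in)
      ultimately show ?thesis using nN Suc by (simp add: md_def)
    qed
  qed
qed

lemma finv_both:
  assumes f: "lowb f d" and x1: "md I (x * f $$ d) 1" and x2: "md I (f $$ d * x) 1"
  shows "md (flsI I) (f * finvR f d x) 1" "md (flsI I) (finvR f d x * f) 1"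
proof -
  interpret J: ridl "flsI I" by (rule ridl_flsI)
  let ?R = "finvR f d x" and ?L = "finvL f d x"
  have r: "md (flsI I) (f * ?R) 1" by (rule finvR_right[OF f x2])
  have l: "md (flsI I) (?L * f) 1" by (rule finvL_left[OF f x1])
  have "md (flsI I) ?L (?L * (f * ?R))" using J.md_multl[OF r, of ?L] by (simp add: J.md_sym)
  also have "?L * (f * ?R) = (?L * f) * ?R" by (simp add: mult.assoc)
  also have "md (flsI I) \<dots> ?R" using J.md_multr[OF l, of ?R] by simp
  finally have lr: "md (flsI I) ?L ?R" .
  show "md (flsI I) (f * ?R) 1" by (rule r)
  have "md (flsI I) (?R * f) (?L * f)" using J.md_multr[OF J.md_sym[OF lr]] .
  then show "md (flsI I) (?R * f) 1" using l by (rule J.md_trans)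
qed

end


type_synonym 'r mat = "nat \<Rightarrow> nat \<Rightarrow> 'r"

definition mm :: "nat \<Rightarrow> 'r::ring_1 mat \<Rightarrow> 'r mat \<Rightarrow> 'r mat" where
  "mm n A B = (\<lambda>i j. \<Sum>k\<in>{1..n}. A i k * B k j)"

definition dg :: "(nat \<Rightarrow> 'r::ring_1) \<Rightarrow> 'r mat" where
  "dg g = (\<lambda>i j. if i = j then g i else 0)"

lemma mm_assoc: "mm n (mm n A B) C = mm n A (mm n B C)"
proof (intro ext)
  fix i j
  have "mm n (mm n A B) C i j = (\<Sum>k\<in>{1..n}. \<Sum>l\<in>{1..n}. A i l * B l k * C k j)"
    by (simp add: mm_def sum_distrib_right)
  also have "\<dots> = (\<Sum>l\<in>{1..n}. \<Sum>k\<in>{1..n}. A i l * B l k * C k j)" by (rule sum.swap)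
  also have "\<dots> = mm n A (mm n B C) i j"
    by (simp add: mm_def sum_distrib_left mult.assoc)
  finally show "mm n (mm n A B) C i j = mm n A (mm n B C) i j" .
qed

lemma mm_dg_right: "j \<in> {1..n} \<Longrightarrow> mm n A (dg g) i j = A i j * g j"
proof -
  assume j: "j \<in> {1..n}"
  have "mm n A (dg g) i j = (\<Sum>k\<in>{1..n}. if k = j then A i j * g j else 0)"
    unfolding mm_def dg_def by (intro sum.cong) auto
  then show ?thesis using j by simp
qed

lemma mm_dg_left: "i \<in> {1..n} \<Longrightarrow> mm n (dg g) A i j = g i * A i j"
proof -
  assume i: "i \<in> {1..n}"
  have "mm n (dg g) A i j = (\<Sum>k\<in>{1..n}. if k = i then g i * A i j else 0)"
    unfolding mm_def dg_def by (intro sum.cong) auto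
  then show ?thesis using i by simp
qed

definition lower1 :: "'r::ring_1 mat \<Rightarrow> bool" where
  "lower1 F \<longleftrightarrow> (\<forall>i. F i i = 1) \<and> (\<forall>i j. i < j \<longrightarrow> F i j = 0)"

definition upper1 :: "'r::ring_1 mat \<Rightarrow> bool" where
  "upper1 E \<longleftrightarrow> (\<forall>i. E i i = 1) \<and> (\<forall>i j. j < i \<longrightarrow> E i j = 0)"

definition gsum :: "'r::ring_1 mat \<Rightarrow> (nat \<Rightarrow> 'r) \<Rightarrow> 'r mat \<Rightarrow> nat \<Rightarrow> nat \<Rightarrow> 'r" where
  "gsum F G E i j = (\<Sum>l\<in>{1..min i j}. F i l * G l * E l j)"

lemma gauss_form:
  assumes "lower1 F" "upper1 E" "i \<in> {1..n}" "j \<in> {1..n}"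
  shows "mm n (mm n F (dg G)) E i j = gsum F G E i j"
proof -
  have "mm n (mm n F (dg G)) E i j = (\<Sum>k\<in>{1..n}. F i k * G k * E k j)"
    unfolding mm_def[of n "mm n F (dg G)"]
    by (rule sum.cong[OF HOL.refl]) (subst mm_dg_right, assumption, simp)
  also have "\<dots> = (\<Sum>k\<in>{1..min i j}. F i k * G k * E k j)"
  proof (rule sum.mono_neutral_right)
    show "\<forall>k\<in>{1..n} - {1..min i j}. F i k * G k * E k j = 0"
      using assms(1,2) by (auto simp: lower1_def upper1_def)
  qed (use assms in auto)
  finally show ?thesis by (simp add: gsum_def)
qed

definition mdm :: "nat \<Rightarrow> 'r::ring_1 set \<Rightarrow> 'r mat \<Rightarrow> 'r mat \<Rightarrow> bool" where
  "mdm n I A B \<longleftrightarrow> (\<forall>i\<in>{1..n}. \<forall>j\<in>{1..n}. md I (A i j) (B i j))"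

context ridl
begin

lemma mdm_refl: "mdm n I A A" by (simp add: mdm_def)
lemma mdm_eq: "A = B \<Longrightarrow> mdm n I A B" by (simp add: mdm_def)
lemma mdm_trans[trans]: "mdm n I A B \<Longrightarrow> mdm n I B C \<Longrightarrow> mdm n I A C"
  unfolding mdm_def using md_trans by blast
lemma mdm_trans_eq1[trans]: "A = B \<Longrightarrow> mdm n I B C \<Longrightarrow> mdm n I A C" by simp
lemma mdm_trans_eq2[trans]: "mdm n I A B \<Longrightarrow> B = C \<Longrightarrow> mdm n I A C" by simp
lemma mdm_sym: "mdm n I A B \<Longrightarrow> mdm n I B A" unfolding mdm_def using md_sym by blast
lemma mdm_mm: "mdm n I A A' \<Longrightarrow> mdm n I B B' \<Longrightarrow> mdm n I (mm n A B) (mm n A' B')"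
  unfolding mdm_def mm_def by (auto intro!: md_sum md_mult)

end

definition pinv :: "'a::ring_1 fls \<Rightarrow> 'a fls" where "pinv p = finvR p 0 1"

primrec schur :: "'a::ring_1 fls mat \<Rightarrow> nat \<Rightarrow> 'a fls mat" where
  "schur A 0 = A"
| "schur A (Suc k) = (\<lambda>i j. schur A k i j
      - schur A k i (Suc k) * pinv (schur A k (Suc k) (Suc k)) * schur A k (Suc k) j)"

definition Gt :: "'a::ring_1 fls mat \<Rightarrow> nat \<Rightarrow> 'a fls" where
  "Gt A k = schur A (k - 1) k k"

definition Ft :: "'a::ring_1 fls mat \<Rightarrow> 'a fls mat" where
  "Ft A i k = (if i = k then 1 else if k < i then schur A (k - 1) i k * pinv (Gt A k) else 0)"

definition Et :: "'a::ring_1 fls mat \<Rightarrow> 'a fls mat" where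
  "Et A k j = (if k = j then 1 else if k < j then pinv (Gt A k) * schur A (k - 1) k j else 0)"

lemma lower1_Ft: "lower1 (Ft A)" by (simp add: lower1_def Ft_def)
lemma upper1_Et: "upper1 (Et A)" by (simp add: upper1_def Et_def)

lemma schur_telescope:
  "A i j = (\<Sum>l\<in>{1..m}. schur A (l - 1) i l * pinv (schur A (l - 1) l l) * schur A (l - 1) l j)
           + schur A m i j"
proof (induction m)
  case 0 then show ?case by simp
next
  case (Suc m)
  have "{1..Suc m} = insert (Suc m) {1..m}" by auto
  then show ?case using Suc by (simp add: algebra_simps)
qed

definition sinv :: "int \<Rightarrow> int \<Rightarrow> nat \<Rightarrow> 'a::ring_1 fls mat \<Rightarrow> nat \<Rightarrow> bool" where
  "sinv dF dE n S k \<longleftrightarrow> (\<forall>i\<in>{k<..n}. \<forall>j\<in>{k<..n}.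
      (j < i \<longrightarrow> lowb (S i j) dF) \<and> (i < j \<longrightarrow> lowb (S i j) dE) \<and> (i = j \<longrightarrow> lowb (S i i - 1) 1))"

lemma piv_props:
  assumes "lowb (p - 1) 1"
  shows "lowb p 0" "p $$ 0 = 1"
proof -
  have "lowb (p - 1 + 1) 0" by (rule lowb_add[OF lowb_mono[OF assms] lowb_1]) auto
  then show "lowb p 0" by simp
  have "(p - 1) $$ 0 = 0" using assms by (simp add: lowb_def)
  then show "p $$ 0 = 1" by simp
qed

lemma lowb_pinv: "lowb (pinv p) 0"
  unfolding pinv_def using lowb_finvR[of p 0 1] by simp

lemma pinv_both:
  assumes "ridl I" "lowb (p - 1) 1"
  shows "md (flsI I) (p * pinv p) 1" "md (flsI I) (pinv p * p) 1"
proof -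
  interpret ridl I by fact
  have l: "lowb p 0" "p $$ 0 = 1" using piv_props[OF assms(2)] by auto
  have "md I (1 * p $$ 0) 1" "md I (p $$ 0 * 1) 1" using l by simp_all
  from finv_both[OF l(1) this] show "md (flsI I) (p * pinv p) 1" "md (flsI I) (pinv p * p) 1"
    by (simp_all add: pinv_def)
qed

lemma sinv_step:
  assumes "0 \<le> dF" "0 \<le> dE" "1 \<le> dF + dE" "sinv dF dE n (schur A k) k"
  shows "sinv dF dE n (schur A (Suc k)) (Suc k)"
  unfolding sinv_def
proof (intro ballI conjI impI)
  let ?S = "schur A k" and ?p = "Suc k"
  fix i j assume i: "i \<in> {Suc k<..n}" and j: "j \<in> {Suc k<..n}"
  have p: "?p \<in> {k<..n}" using i by auto
  have i': "i \<in> {k<..n}" and j': "j \<in> {k<..n}" using i j by auto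
  have a1: "lowb (?S i ?p) dF" using assms(4) i' p i unfolding sinv_def by auto
  have a2: "lowb (?S ?p j) dE" using assms(4) j' p j unfolding sinv_def by auto
  have prod: "lowb (?S i ?p * pinv (?S ?p ?p) * ?S ?p j) (dF + 0 + dE)"
    by (intro lowb_mult a1 a2 lowb_pinv)
  have schur_eq: "schur A (Suc k) i j = ?S i j - ?S i ?p * pinv (?S ?p ?p) * ?S ?p j" by simp
  show "lowb (schur A (Suc k) i j) dF" if "j < i"
  proof -
    have "lowb (?S i j) dF" using assms(4) i' j' that unfolding sinv_def by auto
    then show ?thesis unfolding schur_eq
      by (intro lowb_diff lowb_mono[OF prod]) (use assms in auto)
  qed
  show "lowb (schur A (Suc k) i j) dE" if "i < j"
  proof -
    have "lowb (?S i j) dE" using assms(4) i' j' that unfolding sinv_def by auto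
    then show ?thesis unfolding schur_eq
      by (intro lowb_diff lowb_mono[OF prod]) (use assms in auto)
  qed
  show "lowb (schur A (Suc k) i i - 1) 1" if "i = j"
  proof -
    have "lowb (?S i i - 1) 1" using assms(4) i' that unfolding sinv_def by auto
    moreover have "lowb (?S i ?p * pinv (?S ?p ?p) * ?S ?p i) 1"
      using prod that lowb_mono assms(3) by force
    ultimately have "lowb ((?S i i - 1) - ?S i ?p * pinv (?S ?p ?p) * ?S ?p i) 1"
      by (rule lowb_diff)
    then show ?thesis by (simp add: algebra_simps)
  qed
qed

lemma sinv_all:
  assumes "0 \<le> dF" "0 \<le> dE" "1 \<le> dF + dE" "sinv dF dE n A 0"
  shows "sinv dF dE n (schur A k) k"
  by (induction k) (use assms sinv_step in auto)

lemma ldu_props: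
  assumes "0 \<le> dF" "0 \<le> dE" "1 \<le> dF + dE" "sinv dF dE n A 0"
  shows "\<And>l. l \<in> {1..n} \<Longrightarrow> lowb (Gt A l - 1) 1"
    and "\<And>i k. 1 \<le> k \<Longrightarrow> k < i \<Longrightarrow> i \<le> n \<Longrightarrow> lowb (Ft A i k) dF"
    and "\<And>k j. 1 \<le> k \<Longrightarrow> k < j \<Longrightarrow> j \<le> n \<Longrightarrow> lowb (Et A k j) dE"
proof -
  fix l assume l: "l \<in> {1..n}"
  have s: "sinv dF dE n (schur A (l - 1)) (l - 1)" by (rule sinv_all[OF assms])
  have lm: "l \<in> {l - 1<..n}" using l by auto
  show "lowb (Gt A l - 1) 1" using bspec[OF bspec[OF s[unfolded sinv_def] lm] lm]
    unfolding Gt_def by simp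
next
  fix i k assume ik: "k < i" "i \<le> n" and k1: "1 \<le> k"
  show "lowb (Ft A i k) dF"
  proof -
    have "sinv dF dE n (schur A (k - 1)) (k - 1)" by (rule sinv_all[OF assms])
    then have "lowb (schur A (k - 1) i k) dF" using ik k1 unfolding sinv_def by auto
    from lowb_mult[OF this lowb_pinv] show ?thesis using ik unfolding Ft_def by auto
  qed
next
  fix k j assume kj: "k < j" "j \<le> n" and k1: "1 \<le> k"
  show "lowb (Et A k j) dE"
  proof -
    have "sinv dF dE n (schur A (k - 1)) (k - 1)" by (rule sinv_all[OF assms])
    then have "lowb (schur A (k - 1) k j) dE" using kj k1 unfolding sinv_def by auto
    from lowb_mult[OF lowb_pinv this] show ?thesis using kj unfolding Et_def by auto
  qed
qed

lemma ldu_eq: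
  assumes I: "ridl I" and dd: "0 \<le> dF" "0 \<le> dE" "1 \<le> dF + dE" and s: "sinv dF dE n A 0"
    and ij: "i \<in> {1..n}" "j \<in> {1..n}"
  shows "md (flsI I) (gsum (Ft A) (Gt A) (Et A) i j) (A i j)"
proof -
  interpret J: ridl "flsI I" using I by (rule ridl.ridl_flsI)
  define m where "m = min i j - 1"
  have mm1: "min i j = Suc m" using ij m_def by auto
  let ?T = "\<lambda>l. schur A (l - 1) i l * pinv (schur A (l - 1) l l) * schur A (l - 1) l j"
  have G1: "lowb (Gt A l - 1) 1" if "l \<in> {1..n}" for l by (rule ldu_props(1)[OF dd s that])
  have tel: "A i j = (\<Sum>l\<in>{1..m}. ?T l) + schur A m i j" by (rule schur_telescope)
  have split: "{1..Suc m} = insert (Suc m) {1..m}" by auto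
  have "gsum (Ft A) (Gt A) (Et A) i j = (\<Sum>l\<in>{1..m}. Ft A i l * Gt A l * Et A l j)
         + Ft A i (Suc m) * Gt A (Suc m) * Et A (Suc m) j"
    unfolding gsum_def mm1 split by simp
  also have "md (flsI I) \<dots> ((\<Sum>l\<in>{1..m}. ?T l) + schur A m i j)"
  proof (rule J.md_add)
    show "md (flsI I) (\<Sum>l\<in>{1..m}. Ft A i l * Gt A l * Et A l j) (\<Sum>l\<in>{1..m}. ?T l)"
    proof (rule J.md_sum)
      fix l assume l: "l \<in> {1..m}"
      then have li: "l < i" "l < j" "l \<in> {1..n}" using mm1 ij by auto
      let ?g = "Gt A l" and ?a = "schur A (l - 1) i l" and ?b = "schur A (l - 1) l j"
      have "Ft A i l * Gt A l * Et A l j = ?a * pinv ?g * (?g * pinv ?g) * ?b"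
        using li by (simp add: Ft_def Et_def mult.assoc)
      also have "md (flsI I) \<dots> (?a * pinv ?g * 1 * ?b)"
        by (intro J.md_multr J.md_multl pinv_both(1)[OF I G1[OF li(3)]])
      also have "?a * pinv ?g * 1 * ?b = ?T l" by (simp add: Gt_def)
      finally show "md (flsI I) (Ft A i l * Gt A l * Et A l j) (?T l)" .
    qed
  next
    let ?g = "Gt A (Suc m)" and ?S = "schur A m"
    have gs: "lowb (?g - 1) 1" using G1 ij mm1 by (metis atLeastAtMost_iff min_le_iff_disj le_add1 plus_1_eq_Suc Suc_le_eq zero_less_Suc)
    show "md (flsI I) (Ft A i (Suc m) * ?g * Et A (Suc m) j) (?S i j)"
    proof (cases "i = j")
      case True
      then have "i = Suc m" using mm1 by simp
      then show ?thesis using True by (simp add: Ft_def Et_def Gt_def)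
    next
      case False
      show ?thesis
      proof (cases "i < j")
        case True
        then have im: "i = Suc m" using mm1 by simp
        have "Ft A i (Suc m) * ?g * Et A (Suc m) j = (?g * pinv ?g) * ?S (Suc m) j"
          using im True by (simp add: Ft_def Et_def mult.assoc)
        also have "md (flsI I) \<dots> (1 * ?S (Suc m) j)"
          by (intro J.md_multr pinv_both(1)[OF I gs])
        finally show ?thesis using im by simp
      next
        case False2: False
        then have jm: "j = Suc m" "j < i" using mm1 False by auto
        have "Ft A i (Suc m) * ?g * Et A (Suc m) j = ?S i (Suc m) * (pinv ?g * ?g)"
          using jm by (simp add: Ft_def Et_def mult.assoc Gt_def)
        also have "md (flsI I) \<dots> (?S i (Suc m) * 1)"
          by (intro J.md_multl pinv_both(2)[OF I gs])
        finally show ?thesis using jm by simp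
      qed
    qed
  qed
  also have "(\<Sum>l\<in>{1..m}. ?T l) + schur A m i j = A i j" using tel by simp
  finally show ?thesis .
qed

lemma ldu_unique:
  assumes J: "ridl J" and F: "lower1 F" "lower1 F'" and E: "upper1 E" "upper1 E'"
    and inv: "\<And>l. l \<in> {1..n} \<Longrightarrow> \<exists>h. md J (G' l * h) 1 \<and> md J (h * G' l) 1"
    and eq: "\<And>i j. i \<in> {1..n} \<Longrightarrow> j \<in> {1..n} \<Longrightarrow> md J (gsum F G E i j) (gsum F' G' E' i j)"
  shows "k \<in> {1..n} \<Longrightarrow> md J (G k) (G' k) \<and> (\<forall>i\<in>{k<..n}. md J (F i k) (F' i k) \<and> md J (E k i) (E' k i))"
proof (induction k rule: less_induct)
  case (less k)
  interpret ridl J by (rule J)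
  have k: "1 \<le> k" "k \<le> n" using less.prems by auto
  let ?T = "\<lambda>i j. \<Sum>l\<in>{1..k - 1}. F i l * G l * E l j"
  let ?T' = "\<lambda>i j. \<Sum>l\<in>{1..k - 1}. F' i l * G' l * E' l j"
  have TT: "md J (?T i j) (?T' i j)" if "k \<le> i" "i \<le> n" "k \<le> j" "j \<le> n" for i j
  proof (rule md_sum)
    fix l assume l: "l \<in> {1..k - 1}"
    then have "l < k" "l \<in> {1..n}" using k by auto
    then have ih: "md J (G l) (G' l)" "\<forall>i\<in>{l<..n}. md J (F i l) (F' i l) \<and> md J (E l i) (E' l i)"
      using less.IH by auto
    have "md J (F i l) (F' i l)" "md J (E l j) (E' l j)" using ih(2) that \<open>l < k\<close> by auto
    then show "md J (F i l * G l * E l j) (F' i l * G' l * E' l j)"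
      using ih(1) by (intro md_mult)
  qed
  have split: "{1..k} = insert k {1..k - 1}" using k by auto
  have gs: "gsum F G E i j = ?T i j + F i k * G k * E k j" if "min i j = k" for i j
    unfolding gsum_def that split by (subst sum.insert) (auto simp: add.commute)
  have gs': "gsum F' G' E' i j = ?T' i j + F' i k * G' k * E' k j" if "min i j = k" for i j
    unfolding gsum_def that split by (subst sum.insert) (auto simp: add.commute)
  have eqk: "md J (?T i j + F i k * G k * E k j) (?T' i j + F' i k * G' k * E' k j)"
    if "min i j = k" "i \<le> n" "j \<le> n" for i j
    using eq[of i j] that k unfolding gs[OF that(1)] gs'[OF that(1)] by auto
  have cancel: "md J (?T i j + x) (?T' i j + y) \<Longrightarrow> k \<le> i \<Longrightarrow> i \<le> n \<Longrightarrow> k \<le> j \<Longrightarrow> j \<le> n \<Longrightarrow> md J x y" for i j x y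
  proof -
    assume h: "md J (?T i j + x) (?T' i j + y)" "k \<le> i" "i \<le> n" "k \<le> j" "j \<le> n"
    have "md J (?T i j + x - ?T i j) (?T' i j + y - ?T' i j)"
      by (rule md_diff[OF h(1) TT[OF h(2-5)]])
    then show "md J x y" by simp
  qed
  have Gk: "md J (G k) (G' k)"
    using cancel[OF eqk[of k k]] k F E by (simp add: lower1_def upper1_def)
  obtain h where h: "md J (G' k * h) 1" "md J (h * G' k) 1" using inv k by auto
  have Fk: "md J (F i k) (F' i k)" if "i \<in> {k<..n}" for i
  proof -
    have "md J (F i k * G k) (F' i k * G' k)"
      using cancel[OF eqk[of i k]] that k E by (simp add: upper1_def)
    moreover have "md J (F i k * G' k) (F i k * G k)" by (rule md_multl[OF md_sym[OF Gk]])
    ultimately have a: "md J (F i k * G' k) (F' i k * G' k)" by (rule md_trans[rotated])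
    have "md J (F i k) (F i k * (G' k * h))" using md_multl[OF md_sym[OF h(1)]] by simp
    also have "F i k * (G' k * h) = (F i k * G' k) * h" by (simp add: mult.assoc)
    also have "md J \<dots> ((F' i k * G' k) * h)" by (rule md_multr[OF a])
    also have "(F' i k * G' k) * h = F' i k * (G' k * h)" by (simp add: mult.assoc)
    also have "md J \<dots> (F' i k * 1)" by (rule md_multl[OF h(1)])
    finally show ?thesis by simp
  qed
  have Ek: "md J (E k i) (E' k i)" if "i \<in> {k<..n}" for i
  proof -
    have "md J (G k * E k i) (G' k * E' k i)"
      using cancel[OF eqk[of k i]] that k F by (simp add: lower1_def)
    moreover have "md J (G' k * E k i) (G k * E k i)" by (rule md_multr[OF md_sym[OF Gk]])
    ultimately have a: "md J (G' k * E k i) (G' k * E' k i)" by (rule md_trans[rotated])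
    have "md J (E k i) ((h * G' k) * E k i)" using md_multr[OF md_sym[OF h(2)]] by simp
    also have "(h * G' k) * E k i = h * (G' k * E k i)" by (simp add: mult.assoc)
    also have "md J \<dots> (h * (G' k * E' k i))" by (rule md_multl[OF a])
    also have "h * (G' k * E' k i) = (h * G' k) * E' k i" by (simp add: mult.assoc)
    also have "md J \<dots> (1 * E' k i)" by (rule md_multr[OF h(2)])
    finally show ?thesis by simp
  qed
  show ?case using Gk Fk Ek by blast
qed


lemma sum_list_map_upto: "sum_list (map f [a..b]) = (\<Sum>x\<in>{a..b}. f x)"
  by (simp add: interv_sum_list_conv_sum_set_int)
lemma sum_list_map_upt: "sum_list (map f [a..<b]) = (\<Sum>x\<in>{a..<b}. f x)"
  by (simp add: interv_sum_list_conv_sum_set_nat)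
lemma sum_list_concat': "sum_list (concat xss) = sum_list (map sum_list (xss :: 'a::monoid_add list list))"
  by (induction xss) auto

lemma ev_gauss_raw:
  assumes "schom sc"
  shows "ev sc w (gauss_coeff cp cm s i j m) =
    (\<Sum>l\<in>{1..<Suc (min i j)}. \<Sum>a\<in>{-(\<bar>m\<bar> + \<bar>cp l\<bar> + \<bar>cm l\<bar>)..\<bar>m\<bar> + \<bar>cp l\<bar> + \<bar>cm l\<bar>}.
       \<Sum>b\<in>{-(\<bar>m\<bar> + \<bar>cp l\<bar> + \<bar>cm l\<bar>)..\<bar>m\<bar> + \<bar>cp l\<bar> + \<bar>cm l\<bar>}.
        ev sc w (fco s i l a) * ev sc w (gco cp cm s l b) * ev sc w (eco s l j (m - a - b)))"
proof -
  have z: "sc 0 = 0" using assms by (simp add: schom_def)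
  show ?thesis
    unfolding gauss_coeff_def ev_esum[of sc, OF z]
    by (simp add: sum_list_concat' map_concat comp_def sum_list_map_upto sum_list_map_upt del: upt_Suc)
qed

definition sg :: "bool \<Rightarrow> int \<Rightarrow> int" where "sg s m = (if s then m else - m)"
lemma sg_sg[simp]: "sg s (sg s m) = m" by (simp add: sg_def)
lemma sg_diff: "sg s (a - b) = sg s a - sg s b" by (simp add: sg_def)
lemma sg_add: "sg s (a + b) = sg s a + sg s b" by (simp add: sg_def)
lemma sg_0[simp]: "sg s 0 = 0" by (simp add: sg_def)
lemma abs_sg[simp]: "\<bar>sg s m\<bar> = \<bar>m\<bar>" by (simp add: sg_def)
lemma sg_eq0[simp]: "sg s m = 0 \<longleftrightarrow> m = 0" by (simp add: sg_def)
lemma sg_True[simp]: "sg True m = m" and sg_False[simp]: "sg False m = - m" by (simp_all add: sg_def)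

lemma sum_sg_sym: "(\<Sum>a\<in>{-K..K}. f (sg s a)) = (\<Sum>x\<in>{-K..K::int}. f x)"
proof (cases s)
  case False
  show ?thesis
    by (rule sum.reindex_bij_witness[of _ uminus uminus]) (use False in auto)
qed simp

definition cc :: "(nat \<Rightarrow> int) \<Rightarrow> (nat \<Rightarrow> int) \<Rightarrow> bool \<Rightarrow> nat \<Rightarrow> int" where
  "cc cp cm s l = (if s then cp l else cm l)"

definition Fser :: "(gen \<Rightarrow> 'a::ring_1) \<Rightarrow> bool \<Rightarrow> nat \<Rightarrow> nat \<Rightarrow> 'a fls" where
  "Fser w s i l = Abs_fls (\<lambda>m. if l = i then (if m = 0 then 1 else 0)
     else if l < i \<and> 0 \<le> m \<and> (s \<longrightarrow> 0 < m) then w (FG i l (sg s m)) else 0)"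

definition Gser :: "(nat \<Rightarrow> int) \<Rightarrow> (nat \<Rightarrow> int) \<Rightarrow> (gen \<Rightarrow> 'a::ring_1) \<Rightarrow> bool \<Rightarrow> nat \<Rightarrow> 'a fls" where
  "Gser cp cm w s l = Abs_fls (\<lambda>m. if - cc cp cm s l \<le> m then w (GG s l (sg s m)) else 0)"

definition Eser :: "(gen \<Rightarrow> 'a::ring_1) \<Rightarrow> bool \<Rightarrow> nat \<Rightarrow> nat \<Rightarrow> 'a fls" where
  "Eser w s l j = Abs_fls (\<lambda>m. if l = j then (if m = 0 then 1 else 0)
     else if l < j \<and> 0 \<le> m \<and> (\<not> s \<longrightarrow> 0 < m) then w (EG l j (sg s m)) else 0)"

lemma Fser_nth: "Fser w s i l $$ m = (if l = i then (if m = 0 then 1 else 0)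
     else if l < i \<and> 0 \<le> m \<and> (s \<longrightarrow> 0 < m) then w (FG i l (sg s m)) else 0)"
  unfolding Fser_def by (rule nth_Abs_fls_lower_bound[of 0]) auto

lemma Gser_nth: "Gser cp cm w s l $$ m = (if - cc cp cm s l \<le> m then w (GG s l (sg s m)) else 0)"
  unfolding Gser_def by (rule nth_Abs_fls_lower_bound[of "- cc cp cm s l"]) auto

lemma Eser_nth: "Eser w s l j $$ m = (if l = j then (if m = 0 then 1 else 0)
     else if l < j \<and> 0 \<le> m \<and> (\<not> s \<longrightarrow> 0 < m) then w (EG l j (sg s m)) else 0)"
  unfolding Eser_def by (rule nth_Abs_fls_lower_bound[of 0]) auto

lemma lowb_Fser: "lowb (Fser w s i l) 0" by (simp add: lowb_def Fser_nth)
lemma lowb_Fser': "l \<noteq> i \<Longrightarrow> lowb (Fser w s i l) (if s then 1 else 0)" by (auto simp: lowb_def Fser_nth)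
lemma lowb_Gser: "lowb (Gser cp cm w s l) (- cc cp cm s l)" by (simp add: lowb_def Gser_nth)
lemma lowb_Eser: "lowb (Eser w s l j) 0" by (simp add: lowb_def Eser_nth)
lemma lowb_Eser': "l \<noteq> j \<Longrightarrow> lowb (Eser w s l j) (if s then 0 else 1)" by (auto simp: lowb_def Eser_nth)
lemma lower1_Fser: "lower1 (Fser w s)" by (auto simp: lower1_def fls_eq_iff Fser_nth)
lemma upper1_Eser: "upper1 (Eser w s)" by (auto simp: upper1_def fls_eq_iff Eser_nth)

lemma ev_fco: "schom sc \<Longrightarrow> ev sc w (fco s i l m) = Fser w s i l $$ sg s m"
  by (auto simp: fco_def Fser_nth schom_def sg_def)
lemma ev_gco: "schom sc \<Longrightarrow> ev sc w (gco cp cm s l m) = Gser cp cm w s l $$ sg s m"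
  by (auto simp: gco_def Gser_nth schom_def sg_def cc_def)
lemma ev_eco: "schom sc \<Longrightarrow> ev sc w (eco s l j m) = Eser w s l j $$ sg s m"
  by (auto simp: eco_def Eser_nth schom_def sg_def)

lemma fge_coeff:
  fixes F G E :: "'a::ring_1 fls"
  assumes F: "lowb F 0" and G: "lowb G (- c)" and E: "lowb E 0" and K: "\<bar>M\<bar> + \<bar>c\<bar> \<le> K"
  shows "(F * G * E) $$ M = (\<Sum>x\<in>{-K..K}. \<Sum>y\<in>{-K..K}. F $$ x * G $$ y * E $$ (M - x - y))"
proof -
  have GE: "lowb (G * E) (- c + 0)" by (rule lowb_mult[OF G E])
  have "(F * G * E) $$ M = (F * (G * E)) $$ M" by (simp add: mult.assoc)
  also have "\<dots> = (\<Sum>x\<in>{-K..K}. F $$ x * (G * E) $$ (M - x))"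
    by (rule fls_mult_nth_window[OF F GE]) (use K in auto)
  also have "\<dots> = (\<Sum>x\<in>{-K..K}. \<Sum>y\<in>{-K..K}. F $$ x * G $$ y * E $$ (M - x - y))"
  proof (rule sum.cong[OF HOL.refl])
    fix x assume x: "x \<in> {-K..K}"
    show "F $$ x * (G * E) $$ (M - x) = (\<Sum>y\<in>{-K..K}. F $$ x * G $$ y * E $$ (M - x - y))"
    proof (cases "x < 0")
      case True
      then show ?thesis using F by (simp add: lowb_def)
    next
      case False
      have "(G * E) $$ (M - x) = (\<Sum>y\<in>{-K..K}. G $$ y * E $$ (M - x - y))"
        by (rule fls_mult_nth_window[OF G E]) (use K False in auto)
      then show ?thesis by (simp add: sum_distrib_left mult.assoc)
    qed
  qed
  finally show ?thesis .
qed

lemma ev_gauss: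
  assumes sc: "schom sc"
  shows "ev sc w (gauss_coeff cp cm s i j m) =
    gsum (Fser w s) (Gser cp cm w s) (Eser w s) i j $$ sg s m"
proof -
  have "ev sc w (gauss_coeff cp cm s i j m) = (\<Sum>l\<in>{1..min i j}.
    (Fser w s i l * Gser cp cm w s l * Eser w s l j) $$ sg s m)"
    unfolding ev_gauss_raw[OF sc] atLeastLessThanSuc_atLeastAtMost
  proof (rule sum.cong[OF HOL.refl])
    fix l
    define K where "K = \<bar>m\<bar> + \<bar>cp l\<bar> + \<bar>cm l\<bar>"
    have "(\<Sum>a\<in>{- K..K}. \<Sum>b\<in>{- K..K}.
        ev sc w (fco s i l a) * ev sc w (gco cp cm s l b) * ev sc w (eco s l j (m - a - b)))
      = (\<Sum>a\<in>{- K..K}. \<Sum>b\<in>{- K..K}. Fser w s i l $$ sg s a * Gser cp cm w s l $$ sg s b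
          * Eser w s l j $$ (sg s m - sg s a - sg s b))"
      by (simp add: ev_fco[OF sc] ev_gco[OF sc] ev_eco[OF sc] sg_diff)
    also have "\<dots> = (\<Sum>x\<in>{- K..K}. \<Sum>y\<in>{- K..K}. Fser w s i l $$ x * Gser cp cm w s l $$ y
          * Eser w s l j $$ (sg s m - x - y))"
      by (subst sum_sg_sym[where f = "\<lambda>x. \<Sum>b\<in>{- K..K}. Fser w s i l $$ x * Gser cp cm w s l $$ sg s b
          * Eser w s l j $$ (sg s m - x - sg s b)"])
         (subst sum_sg_sym[where f = "\<lambda>y. Fser w s i l $$ _ * Gser cp cm w s l $$ y
          * Eser w s l j $$ (sg s m - _ - y)"], rule HOL.refl)
    also have "\<dots> = (Fser w s i l * Gser cp cm w s l * Eser w s l j) $$ sg s m"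
      by (rule fge_coeff[OF lowb_Fser lowb_Gser lowb_Eser, symmetric]) (auto simp: K_def cc_def)
    finally show "(\<Sum>a\<in>{- (\<bar>m\<bar> + \<bar>cp l\<bar> + \<bar>cm l\<bar>)..\<bar>m\<bar> + \<bar>cp l\<bar> + \<bar>cm l\<bar>}.
        \<Sum>b\<in>{- (\<bar>m\<bar> + \<bar>cp l\<bar> + \<bar>cm l\<bar>)..\<bar>m\<bar> + \<bar>cp l\<bar> + \<bar>cm l\<bar>}.
        ev sc w (fco s i l a) * ev sc w (gco cp cm s l b) * ev sc w (eco s l j (m - a - b)))
      = (Fser w s i l * Gser cp cm w s l * Eser w s l j) $$ sg s m" unfolding K_def .
  qed
  also have "\<dots> = gsum (Fser w s) (Gser cp cm w s) (Eser w s) i j $$ sg s m"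
    by (simp add: gsum_def fls_nth_sum)
  finally show ?thesis .
qed


lemma sum4_swap:
  "(\<Sum>p\<in>N. \<Sum>q\<in>N. \<Sum>u\<in>N. \<Sum>v\<in>N. f p q u v) = (\<Sum>u\<in>N. \<Sum>v\<in>N. \<Sum>p\<in>N. \<Sum>q\<in>N. f p q u v)"
proof -
  have "(\<Sum>p\<in>N. \<Sum>q\<in>N. \<Sum>u\<in>N. \<Sum>v\<in>N. f p q u v) = (\<Sum>p\<in>N. \<Sum>u\<in>N. \<Sum>q\<in>N. \<Sum>v\<in>N. f p q u v)"
    by (intro sum.cong HOL.refl sum.swap)
  also have "\<dots> = (\<Sum>u\<in>N. \<Sum>p\<in>N. \<Sum>q\<in>N. \<Sum>v\<in>N. f p q u v)" by (rule sum.swap)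
  also have "\<dots> = (\<Sum>u\<in>N. \<Sum>p\<in>N. \<Sum>v\<in>N. \<Sum>q\<in>N. f p q u v)"
    by (intro sum.cong HOL.refl sum.swap)
  also have "\<dots> = (\<Sum>u\<in>N. \<Sum>v\<in>N. \<Sum>p\<in>N. \<Sum>q\<in>N. f p q u v)"
    by (intro sum.cong HOL.refl sum.swap)
  finally show ?thesis .
qed

context ridl
begin

lemma delta_rtt_abstract:
  fixes A B C D :: "nat \<Rightarrow> nat \<Rightarrow> 'r" and \<rho> :: "nat \<Rightarrow> nat \<Rightarrow> nat \<Rightarrow> nat \<Rightarrow> 'r"
  assumes H1: "\<And>i k u v. i \<in> N \<Longrightarrow> k \<in> N \<Longrightarrow> u \<in> N \<Longrightarrow> v \<in> N \<Longrightarrow>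
      md I (\<Sum>p\<in>N. \<Sum>q\<in>N. \<rho> i p k q * (A p u * C q v)) (\<Sum>p\<in>N. \<Sum>q\<in>N. (C k q * A i p) * \<rho> p u q v)"
    and H2: "\<And>p q j l. p \<in> N \<Longrightarrow> q \<in> N \<Longrightarrow> j \<in> N \<Longrightarrow> l \<in> N \<Longrightarrow>
      md I (\<Sum>u\<in>N. \<Sum>v\<in>N. \<rho> p u q v * (B u j * D v l)) (\<Sum>u\<in>N. \<Sum>v\<in>N. (D q v * B p u) * \<rho> u j v l)"
    and H3: "\<And>u j q v. u \<in> N \<Longrightarrow> j \<in> N \<Longrightarrow> q \<in> N \<Longrightarrow> v \<in> N \<Longrightarrow> md I (B u j * C q v) (C q v * B u j)"
    and H4: "\<And>i p q v. i \<in> N \<Longrightarrow> p \<in> N \<Longrightarrow> q \<in> N \<Longrightarrow> v \<in> N \<Longrightarrow> md I (A i p * D q v) (D q v * A i p)"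
    and idx: "i \<in> N" "k \<in> N" "j \<in> N" "l \<in> N"
  shows "md I (\<Sum>p\<in>N. \<Sum>q\<in>N. \<rho> i p k q * ((\<Sum>u\<in>N. A p u * B u j) * (\<Sum>v\<in>N. C q v * D v l)))
              (\<Sum>p\<in>N. \<Sum>q\<in>N. ((\<Sum>v\<in>N. C k v * D v q) * (\<Sum>u\<in>N. A i u * B u p)) * \<rho> p j q l)"
proof -
  have "(\<Sum>p\<in>N. \<Sum>q\<in>N. \<rho> i p k q * ((\<Sum>u\<in>N. A p u * B u j) * (\<Sum>v\<in>N. C q v * D v l)))
      = (\<Sum>p\<in>N. \<Sum>q\<in>N. \<Sum>u\<in>N. \<Sum>v\<in>N. \<rho> i p k q * (A p u * (B u j * C q v) * D v l))"
    by (simp add: sum_distrib_left sum_distrib_right mult.assoc) (intro sum.cong HOL.refl sum.swap)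
  also have "md I \<dots> (\<Sum>p\<in>N. \<Sum>q\<in>N. \<Sum>u\<in>N. \<Sum>v\<in>N. \<rho> i p k q * (A p u * (C q v * B u j) * D v l))"
    by (intro md_sum md_multl md_multr H3) (auto simp: idx)
  also have "\<dots> = (\<Sum>u\<in>N. \<Sum>v\<in>N. \<Sum>p\<in>N. \<Sum>q\<in>N. \<rho> i p k q * (A p u * (C q v * B u j) * D v l))"
    by (rule sum4_swap)
  also have "\<dots> = (\<Sum>u\<in>N. \<Sum>v\<in>N. (\<Sum>p\<in>N. \<Sum>q\<in>N. \<rho> i p k q * (A p u * C q v)) * (B u j * D v l))"
    by (simp add: sum_distrib_left sum_distrib_right mult.assoc)
  also have "md I \<dots> (\<Sum>u\<in>N. \<Sum>v\<in>N. (\<Sum>p\<in>N. \<Sum>q\<in>N. (C k q * A i p) * \<rho> p u q v) * (B u j * D v l))"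
    by (intro md_sum md_multr H1 idx) auto
  also have "\<dots> = (\<Sum>u\<in>N. \<Sum>v\<in>N. \<Sum>p\<in>N. \<Sum>q\<in>N. (C k q * A i p) * (\<rho> p u q v * (B u j * D v l)))"
    by (simp add: sum_distrib_left sum_distrib_right mult.assoc)
  also have "\<dots> = (\<Sum>p\<in>N. \<Sum>q\<in>N. \<Sum>u\<in>N. \<Sum>v\<in>N. (C k q * A i p) * (\<rho> p u q v * (B u j * D v l)))"
    by (rule sum4_swap[symmetric])
  also have "\<dots> = (\<Sum>p\<in>N. \<Sum>q\<in>N. (C k q * A i p) * (\<Sum>u\<in>N. \<Sum>v\<in>N. \<rho> p u q v * (B u j * D v l)))"
    by (simp add: sum_distrib_left)
  also have "md I \<dots> (\<Sum>p\<in>N. \<Sum>q\<in>N. (C k q * A i p) * (\<Sum>u\<in>N. \<Sum>v\<in>N. (D q v * B p u) * \<rho> u j v l))"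
    by (intro md_sum md_multl H2 idx) auto
  also have "\<dots> = (\<Sum>p\<in>N. \<Sum>q\<in>N. \<Sum>u\<in>N. \<Sum>v\<in>N. C k q * ((A i p * D q v) * B p u) * \<rho> u j v l)"
    by (simp add: sum_distrib_left mult.assoc)
  also have "md I \<dots> (\<Sum>p\<in>N. \<Sum>q\<in>N. \<Sum>u\<in>N. \<Sum>v\<in>N. C k q * ((D q v * A i p) * B p u) * \<rho> u j v l)"
    by (intro md_sum md_multl md_multr H4 idx) auto
  also have "\<dots> = (\<Sum>u\<in>N. \<Sum>v\<in>N. \<Sum>p\<in>N. \<Sum>q\<in>N. C k q * ((D q v * A i p) * B p u) * \<rho> u j v l)"
    by (rule sum4_swap)
  also have "\<dots> = (\<Sum>u\<in>N. \<Sum>v\<in>N. ((\<Sum>q\<in>N. C k q * D q v) * (\<Sum>p\<in>N. A i p * B p u)) * \<rho> u j v l)"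
  proof -
    have "(\<Sum>p\<in>N. \<Sum>q\<in>N. C k q * ((D q v * A i p) * B p u) * \<rho> u j v l)
        = (\<Sum>q\<in>N. \<Sum>p\<in>N. C k q * ((D q v * A i p) * B p u) * \<rho> u j v l)" for u v
      by (rule sum.swap)
    then show ?thesis by (simp add: sum_distrib_left sum_distrib_right mult.assoc)
  qed
  finally show ?thesis .
qed

end


definition cz :: "'a::ring_1 fls \<Rightarrow> 'a fls fls" where "cz f = fls_const f"
definition cw :: "'a::ring_1 fls \<Rightarrow> 'a fls fls" where "cw g = Abs_fls (\<lambda>m. fls_const (g $$ m))"

lemma cw_nth: "cw g $$ m = fls_const (g $$ m)"
proof -
  obtain N where N: "\<forall>n<N. g $$ n = 0" by (rule fls_nth_vanishes_belowE)
  show ?thesis unfolding cw_def by (rule nth_Abs_fls_lower_bound[of N]) (use N in auto)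
qed

lemma fls_const_sum: "fls_const (sum h A) = (\<Sum>x\<in>A. fls_const (h x) :: 'a::comm_monoid_add fls)"
  by (induction A rule: infinite_finite_induct) (auto simp: fls_plus_const[symmetric])

lemma lowb_subdeg: "lowb f (fls_subdegree f)" by (simp add: lowb_def)
lemma lowb_cw: "lowb (cw g) (fls_subdegree g)" by (simp add: lowb_def cw_nth)

lemma cz_add: "cz (f + g) = cz f + cz g" by (simp add: cz_def fls_plus_const)
lemma cz_mult: "cz (f * g) = cz f * cz g" by (simp add: cz_def)
lemma cz_sum: "cz (sum h A) = (\<Sum>x\<in>A. cz (h x))" by (simp add: cz_def fls_const_sum)
lemma cw_add: "cw (f + g) = cw f + cw g" by (simp add: fls_eq_iff cw_nth fls_plus_const)
lemma cw_sum: "cw (sum h A) = (\<Sum>x\<in>A. cw (h x))"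
  by (simp add: fls_eq_iff cw_nth fls_nth_sum fls_const_sum)
lemma cw_mult: "cw (f * g) = cw f * cw g"
proof (rule fls_eqI)
  fix m
  let ?W = "{fls_subdegree f..m - fls_subdegree g}"
  have "(cw f * cw g) $$ m = (\<Sum>i\<in>?W. cw f $$ i * cw g $$ (m - i))"
    by (rule fls_mult_nth_window[OF lowb_cw lowb_cw]) auto
  also have "\<dots> = fls_const (\<Sum>i\<in>?W. f $$ i * g $$ (m - i))"
    by (simp add: cw_nth fls_const_sum)
  also have "(\<Sum>i\<in>?W. f $$ i * g $$ (m - i)) = (f * g) $$ m"
    by (rule fls_mult_nth_window[OF lowb_subdeg lowb_subdeg, symmetric]) auto
  finally show "cw (f * g) $$ m = (cw f * cw g) $$ m" by (simp add: cw_nth)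
qed

lemma czcw_nth: "((cz h * cw g) $$ b) $$ a = h $$ a * g $$ b"
  by (simp add: cz_def cw_nth)
lemma cwcz_nth: "((cw g * cz h) $$ b) $$ a = g $$ b * h $$ a"
  by (simp add: cz_def cw_nth)

definition shz :: "bool \<Rightarrow> 'a::ring_1 fls" where "shz s = (if s then fls_X_inv else fls_X)"

lemma shz_nth: "(shz s * f) $$ m = f $$ (m + sg s 1)" "(f * shz s) $$ m = f $$ (m + sg s 1)"
  by (simp_all add: shz_def fls_X_inv_times_conv_shift fls_X_times_conv_shift)

definition rho :: "(K \<Rightarrow> 'a::ring_1) \<Rightarrow> bool \<Rightarrow> bool \<Rightarrow> K \<times> K \<Rightarrow> 'a fls fls" where
  "rho sc s s' ab = cz (fls_const (sc (fst ab)) * shz s) + cz (fls_const (sc (snd ab))) * shz s'"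

definition Lf :: "(K \<Rightarrow> 'a::ring_1) \<Rightarrow> nat \<Rightarrow> (bool \<Rightarrow> nat \<Rightarrow> nat \<Rightarrow> int \<Rightarrow> 'a)
    \<Rightarrow> bool \<Rightarrow> bool \<Rightarrow> nat \<Rightarrow> nat \<Rightarrow> nat \<Rightarrow> nat \<Rightarrow> int \<Rightarrow> int \<Rightarrow> 'a" where
  "Lf sc n X s s' i k j l a b = (\<Sum>p\<in>{1..n}. \<Sum>q\<in>{1..n}.
      sc (fst (rcoef i p k q)) * (X s p j (a + 1) * X s' q l b)
    + sc (snd (rcoef i p k q)) * (X s p j a * X s' q l (b + 1)))"

definition Rf :: "(K \<Rightarrow> 'a::ring_1) \<Rightarrow> nat \<Rightarrow> (bool \<Rightarrow> nat \<Rightarrow> nat \<Rightarrow> int \<Rightarrow> 'a)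
    \<Rightarrow> bool \<Rightarrow> bool \<Rightarrow> nat \<Rightarrow> nat \<Rightarrow> nat \<Rightarrow> nat \<Rightarrow> int \<Rightarrow> int \<Rightarrow> 'a" where
  "Rf sc n X s s' i k j l a b = (\<Sum>p\<in>{1..n}. \<Sum>q\<in>{1..n}.
      sc (fst (rcoef p j q l)) * (X s' k q b * X s i p (a + 1))
    + sc (snd (rcoef p j q l)) * (X s' k q (b + 1) * X s i p a))"

lemma ev_rtt_lhs:
  assumes "schom sc"
  shows "ev sc w (rtt_lhs n s s' i k j l a b) = Lf sc n (\<lambda>s i j m. w (TG s i j m)) s s' i k j l a b"
proof -
  have z: "sc 0 = 0" using assms by (simp add: schom_def)
  show ?thesis unfolding rtt_lhs_def Lf_def ev_esum[of sc, OF z]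
    by (simp add: sum_list_concat' map_concat comp_def sum_list_map_upt tco_def
        atLeastLessThanSuc_atLeastAtMost del: upt_Suc)
qed

lemma ev_rtt_rhs:
  assumes "schom sc"
  shows "ev sc w (rtt_rhs n s s' i k j l a b) = Rf sc n (\<lambda>s i j m. w (TG s i j m)) s s' i k j l a b"
proof -
  have z: "sc 0 = 0" using assms by (simp add: schom_def)
  show ?thesis unfolding rtt_rhs_def Rf_def ev_esum[of sc, OF z]
    by (simp add: sum_list_concat' map_concat comp_def sum_list_map_upt tco_def
        atLeastLessThanSuc_atLeastAtMost del: upt_Suc)
qed

definition L2 :: "(K \<Rightarrow> 'a::ring_1) \<Rightarrow> nat \<Rightarrow> (bool \<Rightarrow> nat \<Rightarrow> nat \<Rightarrow> 'a fls)
    \<Rightarrow> bool \<Rightarrow> bool \<Rightarrow> nat \<Rightarrow> nat \<Rightarrow> nat \<Rightarrow> nat \<Rightarrow> 'a fls fls" where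
  "L2 sc n T s s' i k j l = (\<Sum>p\<in>{1..n}. \<Sum>q\<in>{1..n}.
      rho sc s s' (rcoef i p k q) * (cz (T s p j) * cw (T s' q l)))"

definition R2 :: "(K \<Rightarrow> 'a::ring_1) \<Rightarrow> nat \<Rightarrow> (bool \<Rightarrow> nat \<Rightarrow> nat \<Rightarrow> 'a fls)
    \<Rightarrow> bool \<Rightarrow> bool \<Rightarrow> nat \<Rightarrow> nat \<Rightarrow> nat \<Rightarrow> nat \<Rightarrow> 'a fls fls" where
  "R2 sc n T s s' i k j l = (\<Sum>p\<in>{1..n}. \<Sum>q\<in>{1..n}.
      (cw (T s' k q) * cz (T s i p)) * rho sc s s' (rcoef p j q l))"

definition Xof :: "(bool \<Rightarrow> nat \<Rightarrow> nat \<Rightarrow> 'a::ring_1 fls) \<Rightarrow> bool \<Rightarrow> nat \<Rightarrow> nat \<Rightarrow> int \<Rightarrow> 'a" where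
  "Xof T s i j m = T s i j $$ sg s m"

lemma rho_left_nth:
  "((rho sc s s' ab * (cz f * cw g)) $$ b) $$ a =
     sc (fst ab) * (f $$ (a + sg s 1) * g $$ b) + sc (snd ab) * (f $$ a * g $$ (b + sg s' 1))"
proof -
  have "rho sc s s' ab * (cz f * cw g) = cz (fls_const (sc (fst ab)) * (shz s * f)) * cw g
      + cz (fls_const (sc (snd ab))) * (shz s' * (cz f * cw g))"
    by (simp add: rho_def distrib_right cz_mult mult.assoc)
  then show ?thesis
    by (simp add: czcw_nth shz_nth cz_def mult.assoc cw_nth)
qed

lemma rho_right_nth:
  assumes "schom sc"
  shows "(((cw g * cz f) * rho sc s s' ab) $$ b) $$ a =
     sc (fst ab) * (g $$ b * f $$ (a + sg s 1)) + sc (snd ab) * (g $$ (b + sg s' 1) * f $$ a)"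
proof -
  have "(cw g * cz f) * rho sc s s' ab = cw g * cz ((f * fls_const (sc (fst ab))) * shz s)
      + (cw g * cz (f * fls_const (sc (snd ab)))) * shz s'"
    by (simp add: rho_def distrib_left cz_mult mult.assoc)
  then have "(((cw g * cz f) * rho sc s s' ab) $$ b) $$ a =
      g $$ b * (f $$ (a + sg s 1) * sc (fst ab)) + g $$ (b + sg s' 1) * (f $$ a * sc (snd ab))"
    by (simp add: cwcz_nth shz_nth)
  also have "\<dots> = sc (fst ab) * (g $$ b * f $$ (a + sg s 1)) + sc (snd ab) * (g $$ (b + sg s' 1) * f $$ a)"
    using schomD(5)[OF assms] by (simp add: mult.assoc)
  finally show ?thesis .
qed

lemma L2_nth: "((L2 sc n T s s' i k j l) $$ b) $$ a = Lf sc n (Xof T) s s' i k j l (sg s a) (sg s' b)"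
  unfolding L2_def Lf_def Xof_def
  by (simp add: fls_nth_sum rho_left_nth sg_add)

lemma R2_nth: "schom sc \<Longrightarrow> ((R2 sc n T s s' i k j l) $$ b) $$ a = Rf sc n (Xof T) s s' i k j l (sg s a) (sg s' b)"
  unfolding R2_def Rf_def Xof_def
  by (simp add: fls_nth_sum rho_right_nth sg_add)

lemma (in ridl) md_flsI2: "md (flsI (flsI I)) H H' \<longleftrightarrow> (\<forall>b a. md I ((H $$ b) $$ a) ((H' $$ b) $$ a))"
  by (simp add: md_flsI)


lemma delta_rtt:
  fixes T1 T2 :: "bool \<Rightarrow> nat \<Rightarrow> nat \<Rightarrow> 'a::ring_1 fls"
  assumes Z: "ridl Z" and sc: "schom sc"
    and R1: "\<And>s s' i k j l a b. i \<in> {1..n} \<Longrightarrow> k \<in> {1..n} \<Longrightarrow> j \<in> {1..n} \<Longrightarrow> l \<in> {1..n} \<Longrightarrow>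
       md Z (Lf sc n (Xof T1) s s' i k j l a b) (Rf sc n (Xof T1) s s' i k j l a b)"
    and R2: "\<And>s s' i k j l a b. i \<in> {1..n} \<Longrightarrow> k \<in> {1..n} \<Longrightarrow> j \<in> {1..n} \<Longrightarrow> l \<in> {1..n} \<Longrightarrow>
       md Z (Lf sc n (Xof T2) s s' i k j l a b) (Rf sc n (Xof T2) s s' i k j l a b)"
    and C: "\<And>s s' i j k l m m'. i \<in> {1..n} \<Longrightarrow> j \<in> {1..n} \<Longrightarrow> k \<in> {1..n} \<Longrightarrow> l \<in> {1..n} \<Longrightarrow>
       md Z (T1 s i j $$ m * T2 s' k l $$ m') (T2 s' k l $$ m' * T1 s i j $$ m)"
    and idx: "i \<in> {1..n}" "k \<in> {1..n}" "j \<in> {1..n}" "l \<in> {1..n}"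
  shows "md Z (Lf sc n (Xof (\<lambda>s i j. \<Sum>u\<in>{1..n}. T1 s i u * T2 s u j)) s s' i k j l a b)
              (Rf sc n (Xof (\<lambda>s i j. \<Sum>u\<in>{1..n}. T1 s i u * T2 s u j)) s s' i k j l a b)"
proof -
  interpret Z: ridl Z by (rule Z)
  interpret JJ: ridl "flsI (flsI Z)" by (rule ridl.ridl_flsI[OF Z.ridl_flsI])
  let ?N = "{1..n}"
  define TD where "TD = (\<lambda>s i j. \<Sum>u\<in>{1..n}. T1 s i u * T2 s u j)"
  have LR: "md (flsI (flsI Z)) (L2 sc n T s s' i k j l) (R2 sc n T s s' i k j l)"
    if h: "\<And>a b. md Z (Lf sc n (Xof T) s s' i k j l a b) (Rf sc n (Xof T) s s' i k j l a b)" for T i k j l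
    unfolding Z.md_flsI2 L2_nth R2_nth[OF sc] using h by blast
  let ?A = "\<lambda>p u. cz (T1 s p u)" and ?B = "\<lambda>u j. cz (T2 s u j)"
  let ?C = "\<lambda>q v. cw (T1 s' q v)" and ?D = "\<lambda>v l. cw (T2 s' v l)"
  let ?\<rho> = "\<lambda>i p k q. rho sc s s' (rcoef i p k q)"
  have main: "md (flsI (flsI Z))
      (\<Sum>p\<in>?N. \<Sum>q\<in>?N. ?\<rho> i p k q * ((\<Sum>u\<in>?N. ?A p u * ?B u j) * (\<Sum>v\<in>?N. ?C q v * ?D v l)))
      (\<Sum>p\<in>?N. \<Sum>q\<in>?N. ((\<Sum>v\<in>?N. ?C k v * ?D v q) * (\<Sum>u\<in>?N. ?A i u * ?B u p)) * ?\<rho> p j q l)"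
  proof (rule JJ.delta_rtt_abstract[OF _ _ _ _ idx(1) idx(2) idx(3) idx(4)])
    fix i k u v assume "i \<in> ?N" "k \<in> ?N" "u \<in> ?N" "v \<in> ?N"
    then show "md (flsI (flsI Z)) (\<Sum>p\<in>?N. \<Sum>q\<in>?N. ?\<rho> i p k q * (?A p u * ?C q v))
        (\<Sum>p\<in>?N. \<Sum>q\<in>?N. (?C k q * ?A i p) * ?\<rho> p u q v)"
      using LR[of T1 i k u v] R1 unfolding L2_def R2_def by blast
  next
    fix p q j l assume "p \<in> ?N" "q \<in> ?N" "j \<in> ?N" "l \<in> ?N"
    then show "md (flsI (flsI Z)) (\<Sum>u\<in>?N. \<Sum>v\<in>?N. ?\<rho> p u q v * (?B u j * ?D v l))
        (\<Sum>u\<in>?N. \<Sum>v\<in>?N. (?D q v * ?B p u) * ?\<rho> u j v l)"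
      using LR[of T2 p q j l] R2 unfolding L2_def R2_def by blast
  next
    fix u j q v assume "u \<in> ?N" "j \<in> ?N" "q \<in> ?N" "v \<in> ?N"
    then show "md (flsI (flsI Z)) (?B u j * ?C q v) (?C q v * ?B u j)"
      unfolding Z.md_flsI2 czcw_nth cwcz_nth using C by (blast intro: Z.md_sym)
  next
    fix i p q v assume "i \<in> ?N" "p \<in> ?N" "q \<in> ?N" "v \<in> ?N"
    then show "md (flsI (flsI Z)) (?A i p * ?D q v) (?D q v * ?A i p)"
      unfolding Z.md_flsI2 czcw_nth cwcz_nth using C by blast
  qed
  have eA: "(\<Sum>u\<in>?N. ?A p u * ?B u j) = cz (TD s p j)" for p j
    by (simp add: TD_def cz_sum cz_mult)
  have eC: "(\<Sum>v\<in>?N. ?C q v * ?D v l) = cw (TD s' q l)" for q l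
    by (simp add: TD_def cw_sum cw_mult)
  have "md (flsI (flsI Z)) (L2 sc n TD s s' i k j l) (R2 sc n TD s s' i k j l)"
    using main unfolding eA eC L2_def R2_def .
  then have "md Z (((L2 sc n TD s s' i k j l) $$ sg s' b) $$ sg s a) (((R2 sc n TD s s' i k j l) $$ sg s' b) $$ sg s a)"
    unfolding Z.md_flsI2 by blast
  then show ?thesis unfolding L2_nth R2_nth[OF sc] TD_def by simp
qed


inductive_set subr :: "'a::ring_1 set \<Rightarrow> (K \<Rightarrow> 'a) \<Rightarrow> 'a set" for S sc where
  sub_gen: "x \<in> S \<Longrightarrow> x \<in> subr S sc"
| sub_sc: "sc k \<in> subr S sc"
| sub_add: "x \<in> subr S sc \<Longrightarrow> y \<in> subr S sc \<Longrightarrow> x + y \<in> subr S sc"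
| sub_mult: "x \<in> subr S sc \<Longrightarrow> y \<in> subr S sc \<Longrightarrow> x * y \<in> subr S sc"
| sub_neg: "x \<in> subr S sc \<Longrightarrow> - x \<in> subr S sc"

lemma sub_zero: "schom sc \<Longrightarrow> 0 \<in> subr S sc"
  using sub_sc[of sc 0 S] by (simp add: schom_def)
lemma sub_one: "schom sc \<Longrightarrow> 1 \<in> subr S sc"
  using sub_sc[of sc 1 S] by (simp add: schom_def)
lemma sub_sum: "schom sc \<Longrightarrow> (\<And>i. i \<in> A \<Longrightarrow> f i \<in> subr S sc) \<Longrightarrow> sum f A \<in> subr S sc"
  by (induction A rule: infinite_finite_induct) (auto intro: sub_zero sub_add)

definition cs :: "'a::ring_1 set \<Rightarrow> 'a fls \<Rightarrow> bool" where "cs S f \<longleftrightarrow> (\<forall>m. f $$ m \<in> S)"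

lemma cs_mult: "schom sc \<Longrightarrow> cs (subr S sc) f \<Longrightarrow> cs (subr S sc) g \<Longrightarrow> cs (subr S sc) (f * g)"
  unfolding cs_def fls_times_nth(2) by (auto intro!: sub_sum sub_mult)
lemma cs_add: "cs (subr S sc) f \<Longrightarrow> cs (subr S sc) g \<Longrightarrow> cs (subr S sc) (f + g)"
  unfolding cs_def by (auto intro!: sub_add)
lemma cs_sum: "schom sc \<Longrightarrow> (\<And>i. i \<in> A \<Longrightarrow> cs (subr S sc) (f i)) \<Longrightarrow> cs (subr S sc) (sum f A)"
  unfolding cs_def fls_nth_sum by (auto intro!: sub_sum)

context ridl
begin

lemma subr_comm1:
  assumes sc: "schom sc" and a: "\<And>b. b \<in> S2 \<Longrightarrow> md I (a * b) (b * a)"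
  shows "y \<in> subr S2 sc \<Longrightarrow> md I (a * y) (y * a)"
proof (induction rule: subr.induct)
  case (sub_gen x) then show ?case by (rule a)
next
  case (sub_sc k) then show ?case using schomD(5)[OF sc] by simp
next
  case (sub_add x y)
  then show ?case by (simp add: distrib_left distrib_right md_add)
next
  case (sub_mult x y)
  have "md I (a * (x * y)) ((x * a) * y)"
    using md_multr[OF sub_mult.IH(1), of y] by (simp add: mult.assoc)
  also have "(x * a) * y = x * (a * y)" by (simp add: mult.assoc)
  also have "md I \<dots> (x * (y * a))" by (rule md_multl[OF sub_mult.IH(2)])
  finally show ?case by (simp add: mult.assoc)
next
  case (sub_neg x) then show ?case using md_uminus by simp
qed

lemma subr_comm:
  assumes sc: "schom sc" and ab: "\<And>a b. a \<in> S1 \<Longrightarrow> b \<in> S2 \<Longrightarrow> md I (a * b) (b * a)"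
    and y: "y \<in> subr S2 sc"
  shows "x \<in> subr S1 sc \<Longrightarrow> md I (x * y) (y * x)"
proof (induction rule: subr.induct)
  case (sub_gen x) then show ?case using subr_comm1[OF sc _ y] ab by blast
next
  case (sub_sc k) then show ?case using schomD(5)[OF sc] by simp
next
  case (sub_add x1 x2)
  then show ?case by (simp add: distrib_left distrib_right md_add)
next
  case (sub_mult x1 x2)
  have "md I ((x1 * x2) * y) (x1 * (y * x2))"
    using md_multl[OF sub_mult.IH(2), of x1] by (simp add: mult.assoc)
  also have "x1 * (y * x2) = (x1 * y) * x2" by (simp add: mult.assoc)
  also have "md I \<dots> ((y * x1) * x2)" by (rule md_multr[OF sub_mult.IH(1)])
  finally show ?case by (simp add: mult.assoc)
next
  case (sub_neg x) then show ?case using md_uminus by simp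
qed

end

lemma dominant_mono:
  assumes "dominant n c" "1 \<le> j" "j \<le> i" "i \<le> n"
  shows "c i \<le> c j"
  using assms(3,4)
proof (induction i)
  case 0 then show ?case using assms(2) by simp
next
  case (Suc i)
  show ?case
  proof (cases "j = Suc i")
    case False
    then have "j \<le> i" using Suc.prems by simp
    moreover have "c (Suc i) \<le> c i" using assms(1) \<open>j \<le> i\<close> assms(2) Suc.prems
      unfolding dominant_def by auto
    ultimately show ?thesis using Suc by simp
  qed simp
qed


context ridl
begin

lemma Lf_md:
  assumes "\<And>s p j m. p \<in> {1..n} \<Longrightarrow> j \<in> {1..n} \<Longrightarrow> md I (X s p j m) (Y s p j m)"
    and "j \<in> {1..n}" "l \<in> {1..n}"
  shows "md I (Lf sc n X s s' i k j l a b) (Lf sc n Y s s' i k j l a b)"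
  unfolding Lf_def using assms by (intro md_sum md_add md_multl md_mult) auto

lemma Rf_md:
  assumes "\<And>s p j m. p \<in> {1..n} \<Longrightarrow> j \<in> {1..n} \<Longrightarrow> md I (X s p j m) (Y s p j m)"
    and "i \<in> {1..n}" "k \<in> {1..n}"
  shows "md I (Rf sc n X s s' i k j l a b) (Rf sc n Y s s' i k j l a b)"
  unfolding Rf_def using assms by (intro md_sum md_add md_multl md_mult) auto

end

definition Bd :: "nat \<Rightarrow> (nat \<Rightarrow> int) \<Rightarrow> (nat \<Rightarrow> int) \<Rightarrow> int" where
  "Bd n cp cm = (\<Sum>l\<in>{1..n}. \<bar>cp l\<bar> + \<bar>cm l\<bar>)"

lemma cc_le_Bd: "l \<in> {1..n} \<Longrightarrow> \<bar>cc cp cm s l\<bar> \<le> Bd n cp cm"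
proof -
  assume l: "l \<in> {1..n}"
  have "\<bar>cc cp cm s l\<bar> \<le> \<bar>cp l\<bar> + \<bar>cm l\<bar>" by (simp add: cc_def)
  also have "\<dots> \<le> Bd n cp cm" unfolding Bd_def
    by (rule member_le_sum[OF l]) auto
  finally show ?thesis .
qed

lemma Bd_nonneg: "0 \<le> Bd n cp cm" unfolding Bd_def by (intro sum_nonneg) auto

lemma FG_in: "1 \<le> l \<Longrightarrow> l < i \<Longrightarrow> i \<le> n \<Longrightarrow> FG i l r \<in> rtt_gens n cp cm"
  unfolding rtt_gens_def by (rule UnI1[OF UnI1[OF UnI1[OF UnI2]]]) auto
lemma EG_in: "1 \<le> l \<Longrightarrow> l < j \<Longrightarrow> j \<le> n \<Longrightarrow> EG l j r \<in> rtt_gens n cp cm"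
  unfolding rtt_gens_def by (rule UnI1[OF UnI1[OF UnI1[OF UnI1[OF UnI2]]]]) auto
lemma GGT_in: "1 \<le> l \<Longrightarrow> l \<le> n \<Longrightarrow> - cp l \<le> m \<Longrightarrow> GG True l m \<in> rtt_gens n cp cm"
  unfolding rtt_gens_def by (rule UnI1[OF UnI1[OF UnI2]]) auto
lemma GGF_in: "1 \<le> l \<Longrightarrow> l \<le> n \<Longrightarrow> m \<le> cm l \<Longrightarrow> GG False l m \<in> rtt_gens n cp cm"
  unfolding rtt_gens_def by (rule UnI1[OF UnI2]) auto
lemma GI_in: "1 \<le> l \<Longrightarrow> l \<le> n \<Longrightarrow> GI s l \<in> rtt_gens n cp cm"
  unfolding rtt_gens_def by (rule UnI2) auto
lemma TG_in: "i \<in> {1..n} \<Longrightarrow> j \<in> {1..n} \<Longrightarrow> TG s i j m \<in> rtt_gens n cp cm"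
  unfolding rtt_gens_def by (rule UnI1[OF UnI1[OF UnI1[OF UnI1[OF UnI1]]]]) auto
lemma GG_in: "1 \<le> l \<Longrightarrow> l \<le> n \<Longrightarrow> - cc cp cm s l \<le> m \<Longrightarrow> GG s l (sg s m) \<in> rtt_gens n cp cm"
  by (cases s) (auto simp: cc_def intro: GGT_in GGF_in)

lemma rel_rtt: "i \<in> {1..n} \<Longrightarrow> k \<in> {1..n} \<Longrightarrow> j \<in> {1..n} \<Longrightarrow> l \<in> {1..n} \<Longrightarrow>
  (rtt_lhs n s s' i k j l a b, rtt_rhs n s s' i k j l a b) \<in> rtt_rels n cp cm"
  unfolding rtt_rels_def by (rule UnI1[OF UnI1[OF UnI1[OF UnI1[OF UnI1]]]]) blast
lemma rel_gauss: "i \<in> {1..n} \<Longrightarrow> j \<in> {1..n} \<Longrightarrow>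
  (Gen (TG s i j m), gauss_coeff cp cm s i j m) \<in> rtt_rels n cp cm"
  unfolding rtt_rels_def by (rule UnI1[OF UnI1[OF UnI1[OF UnI1[OF UnI2]]]]) blast
lemma rel_inv1: "l \<in> {1..n} \<Longrightarrow> (Mul (Gen (GG True l (- cp l))) (Gen (GI True l)), Sc 1) \<in> rtt_rels n cp cm"
  unfolding rtt_rels_def by (rule UnI1[OF UnI1[OF UnI1[OF UnI2]]]) blast
lemma rel_inv2: "l \<in> {1..n} \<Longrightarrow> (Mul (Gen (GI True l)) (Gen (GG True l (- cp l))), Sc 1) \<in> rtt_rels n cp cm"
  unfolding rtt_rels_def by (rule UnI1[OF UnI1[OF UnI2]]) blast
lemma rel_inv3: "l \<in> {1..n} \<Longrightarrow> (Mul (Gen (GG False l (cm l))) (Gen (GI False l)), Sc 1) \<in> rtt_rels n cp cm"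
  unfolding rtt_rels_def by (rule UnI1[OF UnI2])  blast
lemma rel_inv4: "l \<in> {1..n} \<Longrightarrow> (Mul (Gen (GI False l)) (Gen (GG False l (cm l))), Sc 1) \<in> rtt_rels n cp cm"
  unfolding rtt_rels_def by (rule UnI2) blast

locale alg1 =
  fixes n :: nat and cp cm :: "nat \<Rightarrow> int" and Z :: "'a::ring_1 set" and sc :: "K \<Rightarrow> 'a"
    and w :: "gen \<Rightarrow> 'a"
  assumes Z: "ridl Z" and sc: "schom sc"
    and W: "\<And>a b. (a, b) \<in> rtt_rels n cp cm \<Longrightarrow> md Z (ev sc w a) (ev sc w b)"
begin

interpretation Z: ridl Z by (rule Z)

definition T :: "bool \<Rightarrow> nat \<Rightarrow> nat \<Rightarrow> 'a fls" where
  "T s i j = gsum (Fser w s) (Gser cp cm w s) (Eser w s) i j"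

lemma tg: "i \<in> {1..n} \<Longrightarrow> j \<in> {1..n} \<Longrightarrow> md Z (w (TG s i j m)) (T s i j $$ sg s m)"
proof -
  assume ij: "i \<in> {1..n}" "j \<in> {1..n}"
  have "(Gen (TG s i j m), gauss_coeff cp cm s i j m) \<in> rtt_rels n cp cm"
    using ij by (rule rel_gauss)
  from W[OF this] show ?thesis by (simp add: ev_gauss[OF sc] T_def)
qed

lemma rtt: "i \<in> {1..n} \<Longrightarrow> k \<in> {1..n} \<Longrightarrow> j \<in> {1..n} \<Longrightarrow> l \<in> {1..n} \<Longrightarrow>
    md Z (Lf sc n (Xof T) s s' i k j l a b) (Rf sc n (Xof T) s s' i k j l a b)"
proof -
  assume idx: "i \<in> {1..n}" "k \<in> {1..n}" "j \<in> {1..n}" "l \<in> {1..n}"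
  have "(rtt_lhs n s s' i k j l a b, rtt_rhs n s s' i k j l a b) \<in> rtt_rels n cp cm"
    using idx by (rule rel_rtt)
  from W[OF this] have h: "md Z (Lf sc n (\<lambda>s i j m. w (TG s i j m)) s s' i k j l a b)
      (Rf sc n (\<lambda>s i j m. w (TG s i j m)) s s' i k j l a b)"
    by (simp add: ev_rtt_lhs[OF sc] ev_rtt_rhs[OF sc])
  have X: "md Z (w (TG s p j m)) (Xof T s p j m)" if "p \<in> {1..n}" "j \<in> {1..n}" for s p j m
    using tg[OF that] by (simp add: Xof_def)
  have "md Z (Lf sc n (Xof T) s s' i k j l a b) (Lf sc n (\<lambda>s i j m. w (TG s i j m)) s s' i k j l a b)"
    by (rule Z.Lf_md[OF Z.md_sym[OF X]]) (use idx in auto)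
  also note h
  also have "md Z (Rf sc n (\<lambda>s i j m. w (TG s i j m)) s s' i k j l a b) (Rf sc n (Xof T) s s' i k j l a b)"
    by (rule Z.Rf_md[OF X]) (use idx in auto)
  finally show ?thesis .
qed

definition lead :: "bool \<Rightarrow> nat \<Rightarrow> 'a" where
  "lead s l = w (GG s l (sg s (- cc cp cm s l)))"

lemma lead_eq: "Gser cp cm w s l $$ (- cc cp cm s l) = lead s l"
  by (simp add: Gser_nth lead_def)

lemma inv_rel: "l \<in> {1..n} \<Longrightarrow> md Z (lead s l * w (GI s l)) 1 \<and> md Z (w (GI s l) * lead s l) 1"
proof -
  assume l: "l \<in> {1..n}"
  have 1: "sc 1 = 1" using sc by (simp add: schom_def)
  show ?thesis
  proof (cases s)
    case True
    have "(Mul (Gen (GG True l (- cp l))) (Gen (GI True l)), Sc 1) \<in> rtt_rels n cp cm"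
         "(Mul (Gen (GI True l)) (Gen (GG True l (- cp l))), Sc 1) \<in> rtt_rels n cp cm"
      using l by (rule rel_inv1, rule rel_inv2)
    from W[OF this(1)] W[OF this(2)] show ?thesis using True 1 by (simp add: lead_def cc_def)
  next
    case False
    have "(Mul (Gen (GG False l (cm l))) (Gen (GI False l)), Sc 1) \<in> rtt_rels n cp cm"
         "(Mul (Gen (GI False l)) (Gen (GG False l (cm l))), Sc 1) \<in> rtt_rels n cp cm"
      using l by (rule rel_inv3, rule rel_inv4)
    from W[OF this(1)] W[OF this(2)] show ?thesis using False 1 by (simp add: lead_def cc_def)
  qed
qed

definition Ginv :: "bool \<Rightarrow> nat \<Rightarrow> 'a fls" where
  "Ginv s l = finvR (Gser cp cm w s l) (- cc cp cm s l) (w (GI s l))"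

lemma Ginv: "l \<in> {1..n} \<Longrightarrow> md (flsI Z) (Gser cp cm w s l * Ginv s l) 1 \<and> md (flsI Z) (Ginv s l * Gser cp cm w s l) 1"
proof -
  assume l: "l \<in> {1..n}"
  from inv_rel[OF l, of s] have "md Z (w (GI s l) * Gser cp cm w s l $$ (- cc cp cm s l)) 1"
    "md Z (Gser cp cm w s l $$ (- cc cp cm s l) * w (GI s l)) 1" by (simp_all add: lead_eq)
  from Z.finv_both[OF lowb_Gser this] show ?thesis by (simp add: Ginv_def)
qed

lemma lowb_Ginv: "lowb (Ginv s l) (cc cp cm s l)"
  using lowb_finvR[of "Gser cp cm w s l" "- cc cp cm s l" "w (GI s l)"] by (simp add: Ginv_def)

lemma lowb_T: "i \<in> {1..n} \<Longrightarrow> j \<in> {1..n} \<Longrightarrow> lowb (T s i j) (- Bd n cp cm)"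
  unfolding T_def gsum_def
proof (intro lowb_sum)
  fix l assume "i \<in> {1..n}" "j \<in> {1..n}" "l \<in> {1..min i j}"
  then have l: "l \<in> {1..n}" by auto
  have "lowb (Fser w s i l * Gser cp cm w s l * Eser w s l j) (0 + - cc cp cm s l + 0)"
    by (intro lowb_mult lowb_Fser lowb_Gser lowb_Eser)
  then show "lowb (Fser w s i l * Gser cp cm w s l * Eser w s l j) (- Bd n cp cm)"
    by (rule lowb_mono) (use cc_le_Bd[OF l, of cp cm s] in auto)
qed

lemma gens_in: "cs (subr (w ` rtt_gens n cp cm) sc) (T s i j)" if "i \<in> {1..n}" "j \<in> {1..n}"
proof -
  let ?S = "subr (w ` rtt_gens n cp cm) sc"
  have g: "w x \<in> ?S" if "x \<in> rtt_gens n cp cm" for x using that by (auto intro: sub_gen)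
  have z: "0 \<in> ?S" "1 \<in> ?S" using sub_zero[OF sc] sub_one[OF sc] by auto
  show ?thesis unfolding T_def gsum_def
  proof (intro cs_sum[OF sc] cs_mult[OF sc])
    fix l assume l: "l \<in> {1..min i j}"
    show "cs ?S (Fser w s i l)" unfolding cs_def
    proof
      fix m show "Fser w s i l $$ m \<in> ?S"
        unfolding Fser_nth using l that z by (auto intro!: g FG_in)
    qed
    show "cs ?S (Gser cp cm w s l)" unfolding cs_def
    proof
      fix m show "Gser cp cm w s l $$ m \<in> ?S"
        unfolding Gser_nth using l that z by (auto intro!: g GG_in)
    qed
    show "cs ?S (Eser w s l j)" unfolding cs_def
    proof
      fix m show "Eser w s l j $$ m \<in> ?S"
        unfolding Eser_nth using l that z by (auto intro!: g EG_in)
    qed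
  qed
qed

end


locale main =
  fixes n :: nat and cp1 cm1 cp2 cm2 :: "nat \<Rightarrow> int" and Z :: "'a::ring_1 set" and sc :: "K \<Rightarrow> 'a"
    and w1 w2 :: "gen \<Rightarrow> 'a"
  assumes Z: "ridl Z" and sc: "schom sc"
    and dom: "dominant n cp1" "dominant n cm1" "dominant n cp2" "dominant n cm2"
    and W1: "\<And>a b. (a, b) \<in> rtt_rels n cp1 cm1 \<Longrightarrow> md Z (ev sc w1 a) (ev sc w1 b)"
    and W2: "\<And>a b. (a, b) \<in> rtt_rels n cp2 cm2 \<Longrightarrow> md Z (ev sc w2 a) (ev sc w2 b)"
    and CM: "\<And>x y. x \<in> rtt_gens n cp1 cm1 \<Longrightarrow> y \<in> rtt_gens n cp2 cm2 \<Longrightarrow> md Z (w1 x * w2 y) (w2 y * w1 x)"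
begin

sublocale A1: alg1 n cp1 cm1 Z sc w1 by (rule alg1.intro[OF Z sc]) (rule W1)
sublocale A2: alg1 n cp2 cm2 Z sc w2 by (rule alg1.intro[OF Z sc]) (rule W2)

interpretation Z: ridl Z by (rule Z)
interpretation ZF: ridl "flsI Z" by (rule Z.ridl_flsI)

definition TD :: "bool \<Rightarrow> nat \<Rightarrow> nat \<Rightarrow> 'a fls" where
  "TD s i j = (\<Sum>u\<in>{1..n}. A1.T s i u * A2.T s u j)"

lemma comm_T: "i \<in> {1..n} \<Longrightarrow> j \<in> {1..n} \<Longrightarrow> k \<in> {1..n} \<Longrightarrow> l \<in> {1..n} \<Longrightarrow>
   md Z (A1.T s i j $$ m * A2.T s' k l $$ m') (A2.T s' k l $$ m' * A1.T s i j $$ m)"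
proof -
  assume idx: "i \<in> {1..n}" "j \<in> {1..n}" "k \<in> {1..n}" "l \<in> {1..n}"
  have x: "A1.T s i j $$ m \<in> subr (w1 ` rtt_gens n cp1 cm1) sc"
    using A1.gens_in[OF idx(1,2)] unfolding cs_def by blast
  have y: "A2.T s' k l $$ m' \<in> subr (w2 ` rtt_gens n cp2 cm2) sc"
    using A2.gens_in[OF idx(3,4)] unfolding cs_def by blast
  show ?thesis by (rule Z.subr_comm[OF sc _ y x]) (auto intro: CM)
qed

lemma TD_rtt: "i \<in> {1..n} \<Longrightarrow> k \<in> {1..n} \<Longrightarrow> j \<in> {1..n} \<Longrightarrow> l \<in> {1..n} \<Longrightarrow>
    md Z (Lf sc n (Xof TD) s s' i k j l a b) (Rf sc n (Xof TD) s s' i k j l a b)"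
  unfolding TD_def[abs_def]
  by (rule delta_rtt[OF Z sc A1.rtt A2.rtt comm_T]) auto

definition NB :: int where "NB = Bd n cp1 cm1 + Bd n cp2 cm2"

lemma NB_nonneg: "0 \<le> NB" unfolding NB_def using Bd_nonneg[of n] by (simp add: add_nonneg_nonneg)

lemma window:
  assumes ij: "i \<in> {1..n}" "j \<in> {1..n}" and N: "\<bar>m\<bar> + NB \<le> N"
  shows "md Z (\<Sum>k\<in>{1..n}. \<Sum>r\<in>{-N..N}. w1 (TG s i k r) * w2 (TG s k j (m - r))) (TD s i j $$ sg s m)"
proof -
  have "md Z (\<Sum>k\<in>{1..n}. \<Sum>r\<in>{-N..N}. w1 (TG s i k r) * w2 (TG s k j (m - r)))
     (\<Sum>k\<in>{1..n}. \<Sum>r\<in>{-N..N}. A1.T s i k $$ sg s r * A2.T s k j $$ sg s (m - r))"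
    by (intro Z.md_sum Z.md_mult A1.tg A2.tg) (use ij in auto)
  also have "(\<Sum>k\<in>{1..n}. \<Sum>r\<in>{-N..N}. A1.T s i k $$ sg s r * A2.T s k j $$ sg s (m - r))
     = (\<Sum>k\<in>{1..n}. \<Sum>x\<in>{-N..N}. A1.T s i k $$ x * A2.T s k j $$ (sg s m - x))"
  proof (rule sum.cong[OF HOL.refl])
    fix k
    show "(\<Sum>r\<in>{-N..N}. A1.T s i k $$ sg s r * A2.T s k j $$ sg s (m - r))
      = (\<Sum>x\<in>{-N..N}. A1.T s i k $$ x * A2.T s k j $$ (sg s m - x))"
      using sum_sg_sym[where f = "\<lambda>x. A1.T s i k $$ x * A2.T s k j $$ (sg s m - x)" and K = N and s = s]
      by (simp add: sg_diff)
  qed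
  also have "\<dots> = (\<Sum>k\<in>{1..n}. (A1.T s i k * A2.T s k j) $$ sg s m)"
  proof (intro sum.cong HOL.refl)
    fix k assume k: "k \<in> {1..n}"
    have incl: "{- Bd n cp1 cm1..sg s m - - Bd n cp2 cm2} \<subseteq> {-N..N}"
      using N Bd_nonneg[of n cp1 cm1] Bd_nonneg[of n cp2 cm2] unfolding NB_def by (auto simp: sg_def)
    then show "(\<Sum>x\<in>{-N..N}. A1.T s i k $$ x * A2.T s k j $$ (sg s m - x)) = (A1.T s i k * A2.T s k j) $$ sg s m"
      using fls_mult_nth_window[OF A1.lowb_T[OF ij(1) k] A2.lowb_T[OF k ij(2)] incl] by simp
  qed
  also have "\<dots> = TD s i j $$ sg s m" by (simp add: TD_def fls_nth_sum)
  finally show ?thesis .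
qed

end


lemma dg_mm_dg: "i \<in> {1..n} \<Longrightarrow> mm n (dg a) (dg b) i j = dg (\<lambda>l. a l * b l) i j"
  by (subst mm_dg_left) (auto simp: dg_def)

context main
begin

interpretation Z: ridl Z by (rule Z)
interpretation ZF: ridl "flsI Z" by (rule Z.ridl_flsI)

definition dF :: "bool \<Rightarrow> int" where "dF s = (if s then 1 else 0)"
definition dE :: "bool \<Rightarrow> int" where "dE s = (if s then 0 else 1)"

lemma dFE: "0 \<le> dF s" "0 \<le> dE s" "dF s + dE s = 1" by (auto simp: dF_def dE_def)

definition M :: "bool \<Rightarrow> 'a fls mat" where "M s = mm n (Eser w1 s) (Fser w2 s)"

lemma M_sinv: "sinv (dF s) (dE s) n (M s) 0"
  unfolding sinv_def
proof (intro ballI conjI impI)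
  fix i j assume i: "i \<in> {0<..n}" and j: "j \<in> {0<..n}"
  let ?t = "\<lambda>k. Eser w1 s i k * Fser w2 s k j"
  have Mij: "M s i j = (\<Sum>k\<in>{1..n}. ?t k)" by (simp add: M_def mm_def)
  have Ez: "Eser w1 s i k = 0" if "k < i" for k using upper1_Eser[of w1 s] that by (auto simp: upper1_def)
  have Fz: "Fser w2 s k j = 0" if "k < j" for k using lower1_Fser[of w2 s] that by (auto simp: lower1_def)
  show "lowb (M s i j) (dF s)" if "j < i"
    unfolding Mij
  proof (rule lowb_sum)
    fix k assume k: "k \<in> {1..n}"
    show "lowb (?t k) (dF s)"
    proof (cases "k < i")
      case True then show ?thesis by (simp add: Ez)
    next
      case False
      then have "k \<noteq> j" using that by auto
      have "lowb (?t k) (0 + dF s)"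
        by (rule lowb_mult[OF lowb_Eser]) (use lowb_Fser'[of j k w2 s] \<open>k \<noteq> j\<close> in \<open>auto simp: dF_def\<close>)
      then show ?thesis by simp
    qed
  qed
  show "lowb (M s i j) (dE s)" if "i < j"
    unfolding Mij
  proof (rule lowb_sum)
    fix k assume k: "k \<in> {1..n}"
    show "lowb (?t k) (dE s)"
    proof (cases "k < j")
      case True then show ?thesis by (simp add: Fz)
    next
      case False
      then have "i \<noteq> k" using that by auto
      have "lowb (?t k) (dE s + 0)"
        by (rule lowb_mult[OF _ lowb_Fser]) (use lowb_Eser'[of i k w1 s] \<open>i \<noteq> k\<close> in \<open>auto simp: dE_def\<close>)
      then show ?thesis by simp
    qed
  qed
  show "lowb (M s i i - 1) 1" if "i = j"
  proof -
    have iin: "i \<in> {1..n}" using i by auto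
    have "M s i i = (\<Sum>k\<in>{1..n}. Eser w1 s i k * Fser w2 s k i)" by (simp add: M_def mm_def)
    also have "\<dots> = Eser w1 s i i * Fser w2 s i i + (\<Sum>k\<in>{1..n} - {i}. Eser w1 s i k * Fser w2 s k i)"
      by (rule sum.remove[OF finite_atLeastAtMost iin])
    also have "Eser w1 s i i * Fser w2 s i i = 1" using upper1_Eser[of w1 s] lower1_Fser[of w2 s] by (simp add: upper1_def lower1_def)
    finally have e: "M s i i - 1 = (\<Sum>k\<in>{1..n} - {i}. Eser w1 s i k * Fser w2 s k i)" by simp
    show ?thesis unfolding e
    proof (rule lowb_sum)
      fix k assume k: "k \<in> {1..n} - {i}"
      show "lowb (Eser w1 s i k * Fser w2 s k i) 1"
      proof (cases "k < i")
        case True then show ?thesis by (simp add: Ez)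
      next
        case False
        then have "i \<noteq> k" "k \<noteq> i" using k by auto
        have "lowb (Eser w1 s i k * Fser w2 s k i) (dE s + dF s)"
          by (rule lowb_mult) (use lowb_Eser'[of i k w1 s] lowb_Fser'[of i k w2 s] \<open>i \<noteq> k\<close> in \<open>auto simp: dE_def dF_def\<close>)
        then show ?thesis using dFE(3)[of s] by (simp add: add.commute)
      qed
    qed
  qed
qed

abbreviation "Ft' s \<equiv> Ft (M s)"
abbreviation "Gt' s \<equiv> Gt (M s)"
abbreviation "Et' s \<equiv> Et (M s)"

lemma Gt_props: "l \<in> {1..n} \<Longrightarrow> lowb (Gt' s l - 1) 1"
  using ldu_props(1)[OF dFE(1) dFE(2) _ M_sinv] dFE(3) by simp
lemma Ft_low: "1 \<le> k \<Longrightarrow> k < i \<Longrightarrow> i \<le> n \<Longrightarrow> lowb (Ft' s i k) (dF s)"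
  using ldu_props(2)[OF dFE(1) dFE(2) _ M_sinv] dFE(3) by simp
lemma Et_low: "1 \<le> k \<Longrightarrow> k < j \<Longrightarrow> j \<le> n \<Longrightarrow> lowb (Et' s k j) (dE s)"
  using ldu_props(3)[OF dFE(1) dFE(2) _ M_sinv] dFE(3) by simp
lemma M_ldu: "i \<in> {1..n} \<Longrightarrow> j \<in> {1..n} \<Longrightarrow> md (flsI Z) (gsum (Ft' s) (Gt' s) (Et' s) i j) (M s i j)"
  using ldu_eq[OF Z dFE(1) dFE(2) _ M_sinv] dFE(3) by simp

definition Cm :: "bool \<Rightarrow> 'a fls mat" where
  "Cm s i j = (if i = j then 1 else if j < i then Gser cp1 cm1 w1 s i * Ft' s i j * A1.Ginv s j else 0)"
definition Dm :: "bool \<Rightarrow> 'a fls mat" where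
  "Dm s i j = (if i = j then 1 else if i < j then A2.Ginv s i * Et' s i j * Gser cp2 cm2 w2 s j else 0)"
definition Fn :: "bool \<Rightarrow> 'a fls mat" where
  "Fn s i j = (if i = j then 1 else if j < i then mm n (Fser w1 s) (Cm s) i j else 0)"
definition Gn :: "bool \<Rightarrow> nat \<Rightarrow> 'a fls" where
  "Gn s l = Gser cp1 cm1 w1 s l * Gt' s l * Gser cp2 cm2 w2 s l"
definition En :: "bool \<Rightarrow> 'a fls mat" where
  "En s i j = (if i = j then 1 else if i < j then mm n (Dm s) (Eser w2 s) i j else 0)"

lemma lower1_Fn: "lower1 (Fn s)" by (simp add: lower1_def Fn_def)
lemma upper1_En: "upper1 (En s)" by (simp add: upper1_def En_def)

lemma cc_mono1: "1 \<le> j \<Longrightarrow> j \<le> k \<Longrightarrow> k \<le> n \<Longrightarrow> cc cp1 cm1 s k \<le> cc cp1 cm1 s j"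
  using dominant_mono[OF dom(1)] dominant_mono[OF dom(2)] by (auto simp: cc_def)
lemma cc_mono2: "1 \<le> j \<Longrightarrow> j \<le> k \<Longrightarrow> k \<le> n \<Longrightarrow> cc cp2 cm2 s k \<le> cc cp2 cm2 s j"
  using dominant_mono[OF dom(3)] dominant_mono[OF dom(4)] by (auto simp: cc_def)

lemma Cm_low: "1 \<le> j \<Longrightarrow> j \<le> k \<Longrightarrow> k \<le> n \<Longrightarrow> lowb (Cm s k j) (if k = j then 0 else dF s)"
proof -
  assume jk: "1 \<le> j" "j \<le> k" "k \<le> n"
  show ?thesis
  proof (cases "k = j")
    case True then show ?thesis by (simp add: Cm_def lowb_1)
  next
    case False
    then have jk': "j < k" using jk by simp
    have e: "Cm s k j = Gser cp1 cm1 w1 s k * Ft' s k j * A1.Ginv s j" using jk' by (simp add: Cm_def)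
    have "lowb (Cm s k j) (- cc cp1 cm1 s k + dF s + cc cp1 cm1 s j)"
      unfolding e by (rule lowb_mult[OF lowb_mult[OF lowb_Gser Ft_low] A1.lowb_Ginv]) (use jk jk' in auto)
    then show ?thesis using False cc_mono1[OF jk] by (auto elim: lowb_mono)
  qed
qed

lemma Dm_low: "1 \<le> i \<Longrightarrow> i \<le> k \<Longrightarrow> k \<le> n \<Longrightarrow> lowb (Dm s i k) (if i = k then 0 else dE s)"
proof -
  assume ik: "1 \<le> i" "i \<le> k" "k \<le> n"
  show ?thesis
  proof (cases "i = k")
    case True then show ?thesis by (simp add: Dm_def lowb_1)
  next
    case False
    then have ik': "i < k" using ik by simp
    have e: "Dm s i k = A2.Ginv s i * Et' s i k * Gser cp2 cm2 w2 s k" using ik' by (simp add: Dm_def)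
    have "lowb (Dm s i k) (cc cp2 cm2 s i + dE s + - cc cp2 cm2 s k)"
      unfolding e by (rule lowb_mult[OF lowb_mult[OF A2.lowb_Ginv Et_low] lowb_Gser]) (use ik ik' in auto)
    then show ?thesis using False cc_mono2[OF ik] by (auto elim: lowb_mono)
  qed
qed

lemma Fn_low: "1 \<le> j \<Longrightarrow> j < i \<Longrightarrow> i \<le> n \<Longrightarrow> lowb (Fn s i j) (dF s)"
proof -
  assume ji: "1 \<le> j" "j < i" "i \<le> n"
  have e: "Fn s i j = (\<Sum>k\<in>{1..n}. Fser w1 s i k * Cm s k j)" using ji by (simp add: Fn_def mm_def)
  show ?thesis unfolding e
  proof (rule lowb_sum)
    fix k assume k: "k \<in> {1..n}"
    show "lowb (Fser w1 s i k * Cm s k j) (dF s)"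
    proof (cases "i < k \<or> k < j")
      case True
      moreover have "Fser w1 s i k = 0" if "i < k" using lower1_Fser[of w1 s] that by (auto simp: lower1_def)
      moreover have "Cm s k j = 0" if "k < j" using that by (simp add: Cm_def)
      ultimately show ?thesis by auto
    next
      case False
      then have kk: "j \<le> k" "k \<le> i" by auto
      have l1: "lowb (Fser w1 s i k) (if k = i then 0 else dF s)"
        using lowb_Fser[of w1 s i k] lowb_Fser'[of k i w1 s] by (auto simp: dF_def)
      have l2: "lowb (Cm s k j) (if k = j then 0 else dF s)" by (rule Cm_low) (use kk ji in auto)
      have "lowb (Fser w1 s i k * Cm s k j) ((if k = i then 0 else dF s) + (if k = j then 0 else dF s))"
        by (rule lowb_mult[OF l1 l2])
      then show ?thesis using ji dFE(1)[of s] by (auto elim: lowb_mono)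
    qed
  qed
qed

lemma En_low: "1 \<le> i \<Longrightarrow> i < j \<Longrightarrow> j \<le> n \<Longrightarrow> lowb (En s i j) (dE s)"
proof -
  assume ij: "1 \<le> i" "i < j" "j \<le> n"
  have e: "En s i j = (\<Sum>k\<in>{1..n}. Dm s i k * Eser w2 s k j)" using ij by (simp add: En_def mm_def)
  show ?thesis unfolding e
  proof (rule lowb_sum)
    fix k assume k: "k \<in> {1..n}"
    show "lowb (Dm s i k * Eser w2 s k j) (dE s)"
    proof (cases "k < i \<or> j < k")
      case True
      moreover have "Eser w2 s k j = 0" if "j < k" using upper1_Eser[of w2 s] that by (auto simp: upper1_def)
      moreover have "Dm s i k = 0" if "k < i" using that by (simp add: Dm_def)
      ultimately show ?thesis by auto
    next
      case False
      then have kk: "i \<le> k" "k \<le> j" by auto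
      have l1: "lowb (Dm s i k) (if i = k then 0 else dE s)" by (rule Dm_low) (use kk ij in auto)
      have l2: "lowb (Eser w2 s k j) (if k = j then 0 else dE s)"
        using lowb_Eser[of w2 s k j] lowb_Eser'[of k j w2 s] by (auto simp: dE_def)
      have "lowb (Dm s i k * Eser w2 s k j) ((if i = k then 0 else dE s) + (if k = j then 0 else dE s))"
        by (rule lowb_mult[OF l1 l2])
      then show ?thesis using ij dFE(2)[of s] by (auto elim: lowb_mono)
    qed
  qed
qed

definition cB :: "bool \<Rightarrow> nat \<Rightarrow> int" where "cB s l = cc cp1 cm1 s l + cc cp2 cm2 s l"

lemma Gn_low: "l \<in> {1..n} \<Longrightarrow> lowb (Gn s l) (- cB s l)"
proof -
  assume l: "l \<in> {1..n}"
  have "lowb (Gn s l) (- cc cp1 cm1 s l + 0 + - cc cp2 cm2 s l)"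
    unfolding Gn_def by (intro lowb_mult lowb_Gser piv_props(1) Gt_props l)
  then show ?thesis by (simp add: cB_def)
qed

lemma Gn_lead: "l \<in> {1..n} \<Longrightarrow> Gn s l $$ (- cB s l) = A1.lead s l * A2.lead s l"
proof -
  assume l: "l \<in> {1..n}"
  have g: "lowb (Gt' s l) 0" "Gt' s l $$ 0 = 1" using piv_props[OF Gt_props[OF l]] by auto
  have "Gn s l $$ (- cc cp1 cm1 s l + 0 + - cc cp2 cm2 s l)
      = (Gser cp1 cm1 w1 s l * Gt' s l) $$ (- cc cp1 cm1 s l + 0) * Gser cp2 cm2 w2 s l $$ (- cc cp2 cm2 s l)"
    unfolding Gn_def by (rule fls_mult_lowest[OF lowb_mult[OF lowb_Gser g(1)] lowb_Gser])
  also have "(Gser cp1 cm1 w1 s l * Gt' s l) $$ (- cc cp1 cm1 s l + 0) = Gser cp1 cm1 w1 s l $$ (- cc cp1 cm1 s l) * Gt' s l $$ 0"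
    by (rule fls_mult_lowest[OF lowb_Gser g(1)])
  finally show ?thesis using g(2) by (simp add: cB_def A1.lead_eq A2.lead_eq)
qed

end


context main
begin

interpretation Z: ridl Z by (rule Z)
interpretation ZF: ridl "flsI Z" by (rule Z.ridl_flsI)

lemma conjC: "mdm n (flsI Z) (mm n (dg (Gser cp1 cm1 w1 s)) (Ft' s)) (mm n (Cm s) (dg (Gser cp1 cm1 w1 s)))"
  unfolding mdm_def
proof (intro ballI)
  fix i j assume i: "i \<in> {1..n}" and j: "j \<in> {1..n}"
  let ?G = "Gser cp1 cm1 w1 s"
  have l: "mm n (dg ?G) (Ft' s) i j = ?G i * Ft' s i j" by (rule mm_dg_left[OF i])
  have r: "mm n (Cm s) (dg ?G) i j = Cm s i j * ?G j" by (rule mm_dg_right[OF j])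
  show "md (flsI Z) (mm n (dg ?G) (Ft' s) i j) (mm n (Cm s) (dg ?G) i j)"
    unfolding l r
  proof (cases "i = j")
    case True then show "md (flsI Z) (?G i * Ft' s i j) (Cm s i j * ?G j)"
      using lower1_Ft[of "M s"] by (simp add: lower1_def Cm_def)
  next
    case False
    show "md (flsI Z) (?G i * Ft' s i j) (Cm s i j * ?G j)"
    proof (cases "j < i")
      case True
      have "md (flsI Z) (?G i * Ft' s i j * (A1.Ginv s j * ?G j)) (?G i * Ft' s i j * 1)"
        by (rule ZF.md_multl) (use A1.Ginv[OF j] in blast)
      then show ?thesis using True False by (simp add: Cm_def mult.assoc ZF.md_sym)
    next
      case False2: False
      then have "i < j" using False by simp
      then show ?thesis using lower1_Ft[of "M s"] by (simp add: lower1_def Cm_def)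
    qed
  qed
qed

lemma conjD: "mdm n (flsI Z) (mm n (Et' s) (dg (Gser cp2 cm2 w2 s))) (mm n (dg (Gser cp2 cm2 w2 s)) (Dm s))"
  unfolding mdm_def
proof (intro ballI)
  fix i j assume i: "i \<in> {1..n}" and j: "j \<in> {1..n}"
  let ?G = "Gser cp2 cm2 w2 s"
  have l: "mm n (Et' s) (dg ?G) i j = Et' s i j * ?G j" by (rule mm_dg_right[OF j])
  have r: "mm n (dg ?G) (Dm s) i j = ?G i * Dm s i j" by (rule mm_dg_left[OF i])
  show "md (flsI Z) (mm n (Et' s) (dg ?G) i j) (mm n (dg ?G) (Dm s) i j)"
    unfolding l r
  proof (cases "i = j")
    case True then show "md (flsI Z) (Et' s i j * ?G j) (?G i * Dm s i j)"
      using upper1_Et[of "M s"] by (simp add: upper1_def Dm_def)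
  next
    case False
    show "md (flsI Z) (Et' s i j * ?G j) (?G i * Dm s i j)"
    proof (cases "i < j")
      case True
      have "md (flsI Z) ((?G i * A2.Ginv s i) * (Et' s i j * ?G j)) (1 * (Et' s i j * ?G j))"
        by (rule ZF.md_multr) (use A2.Ginv[OF i] in blast)
      then show ?thesis using True False by (simp add: Dm_def mult.assoc ZF.md_sym)
    next
      case False2: False
      then have "j < i" using False by simp
      then show ?thesis using upper1_Et[of "M s"] by (simp add: upper1_def Dm_def)
    qed
  qed
qed

lemma FC_eq: "i \<in> {1..n} \<Longrightarrow> j \<in> {1..n} \<Longrightarrow> mm n (Fser w1 s) (Cm s) i j = Fn s i j"
proof -
  assume i: "i \<in> {1..n}" and j: "j \<in> {1..n}"
  have F0: "Fser w1 s i k = 0" if "i < k" for k using lower1_Fser[of w1 s] that by (auto simp: lower1_def)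
  have C0: "Cm s k j = 0" if "k < j" for k using that by (simp add: Cm_def)
  show ?thesis
  proof (cases "j < i")
    case True then show ?thesis by (simp add: Fn_def)
  next
    case False
    have "mm n (Fser w1 s) (Cm s) i j = (\<Sum>k\<in>{1..n}. if k = i \<and> i = j then 1 else 0)"
      unfolding mm_def
    proof (rule sum.cong[OF HOL.refl])
      fix k assume k: "k \<in> {1..n}"
      show "Fser w1 s i k * Cm s k j = (if k = i \<and> i = j then 1 else 0)"
      proof (cases "i < k")
        case True then show ?thesis by (simp add: F0)
      next
        case False2: False
        show ?thesis
        proof (cases "k < j")
          case True then show ?thesis by (auto simp: C0)
        next
          case False3: False
          then have "k = i" "i = j" using False False2 by auto
          then show ?thesis using lower1_Fser[of w1 s] by (simp add: lower1_def Cm_def)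
        qed
      qed
    qed
    also have "\<dots> = (if i = j then 1 else 0)" using i by (cases "i = j") auto
    finally show ?thesis using False by (simp add: Fn_def)
  qed
qed

lemma DE_eq: "i \<in> {1..n} \<Longrightarrow> j \<in> {1..n} \<Longrightarrow> mm n (Dm s) (Eser w2 s) i j = En s i j"
proof -
  assume i: "i \<in> {1..n}" and j: "j \<in> {1..n}"
  have E0: "Eser w2 s k j = 0" if "j < k" for k using upper1_Eser[of w2 s] that by (auto simp: upper1_def)
  have D0: "Dm s i k = 0" if "k < i" for k using that by (simp add: Dm_def)
  show ?thesis
  proof (cases "i < j")
    case True then show ?thesis by (simp add: En_def)
  next
    case False
    have "mm n (Dm s) (Eser w2 s) i j = (\<Sum>k\<in>{1..n}. if k = i \<and> i = j then 1 else 0)"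
      unfolding mm_def
    proof (rule sum.cong[OF HOL.refl])
      fix k assume k: "k \<in> {1..n}"
      show "Dm s i k * Eser w2 s k j = (if k = i \<and> i = j then 1 else 0)"
      proof (cases "j < k")
        case True then show ?thesis by (simp add: E0)
      next
        case False2: False
        show ?thesis
        proof (cases "k < i")
          case True then show ?thesis by (auto simp: D0)
        next
          case False3: False
          then have "k = i" "i = j" using False False2 by auto
          then show ?thesis using upper1_Eser[of w2 s] by (simp add: upper1_def Dm_def)
        qed
      qed
    qed
    also have "\<dots> = (if i = j then 1 else 0)" using i by (cases "i = j") auto
    finally show ?thesis using False by (simp add: En_def)
  qed
qed

lemma GGG_eq: "i \<in> {1..n} \<Longrightarrow> mm n (dg (Gser cp1 cm1 w1 s)) (mm n (dg (Gt' s)) (dg (Gser cp2 cm2 w2 s))) i j = dg (Gn s) i j"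
proof -
  assume i: "i \<in> {1..n}"
  have "mm n (dg (Gser cp1 cm1 w1 s)) (mm n (dg (Gt' s)) (dg (Gser cp2 cm2 w2 s))) i j
    = Gser cp1 cm1 w1 s i * mm n (dg (Gt' s)) (dg (Gser cp2 cm2 w2 s)) i j" by (rule mm_dg_left[OF i])
  also have "mm n (dg (Gt' s)) (dg (Gser cp2 cm2 w2 s)) i j = dg (\<lambda>l. Gt' s l * Gser cp2 cm2 w2 s l) i j"
    by (rule dg_mm_dg[OF i])
  finally show ?thesis by (simp add: dg_def Gn_def mult.assoc)
qed

lemma mdm_eqI: "ridl I \<Longrightarrow> (\<And>i j. i \<in> {1..n} \<Longrightarrow> j \<in> {1..n} \<Longrightarrow> A i j = B i j) \<Longrightarrow> mdm n I A B"
  by (simp add: mdm_def ridl.md_refl)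

lemma TD_gauss:
  assumes ij: "i \<in> {1..n}" "j \<in> {1..n}"
  shows "md (flsI Z) (TD s i j) (gsum (Fn s) (Gn s) (En s) i j)"
proof -
  let ?F1 = "Fser w1 s" and ?D1 = "dg (Gser cp1 cm1 w1 s)" and ?E1 = "Eser w1 s"
  let ?F2 = "Fser w2 s" and ?D2 = "dg (Gser cp2 cm2 w2 s)" and ?E2 = "Eser w2 s"
  let ?P = "mm n (mm n ?F1 ?D1) ?E1" and ?Q = "mm n (mm n ?F2 ?D2) ?E2"
  let ?L = "mm n (mm n (Ft' s) (dg (Gt' s))) (Et' s)"
  let ?J = "flsI Z"
  have PT: "?P i u = A1.T s i u" if "u \<in> {1..n}" for u
    using gauss_form[OF lower1_Fser upper1_Eser ij(1) that] by (simp add: A1.T_def)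
  have QT: "?Q u j = A2.T s u j" if "u \<in> {1..n}" for u
    using gauss_form[OF lower1_Fser upper1_Eser that ij(2)] by (simp add: A2.T_def)
  have "TD s i j = mm n ?P ?Q i j" unfolding TD_def mm_def[of n ?P ?Q]
    by (rule sum.cong[OF HOL.refl]) (simp add: PT QT)
  also have "mm n ?P ?Q = mm n ?F1 (mm n ?D1 (mm n (M s) (mm n ?D2 ?E2)))"
    by (simp only: mm_assoc M_def)
  finally have e1: "TD s i j = mm n ?F1 (mm n ?D1 (mm n (M s) (mm n ?D2 ?E2))) i j" .
  have MLd: "mdm n ?J (M s) ?L"
    unfolding mdm_def
  proof (intro ballI)
    fix a b assume "a \<in> {1..n}" "b \<in> {1..n}"
    then show "md ?J (M s a b) (?L a b)"
      using M_ldu[of a b s] gauss_form[OF lower1_Ft upper1_Et, of a n b "M s" "Gt' s"]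
      by (simp add: ZF.md_sym)
  qed
  have "mdm n ?J (mm n ?F1 (mm n ?D1 (mm n (M s) (mm n ?D2 ?E2))))
                  (mm n ?F1 (mm n ?D1 (mm n ?L (mm n ?D2 ?E2))))"
    by (intro ZF.mdm_mm ZF.mdm_refl MLd)
  also have "mm n ?F1 (mm n ?D1 (mm n ?L (mm n ?D2 ?E2)))
      = mm n ?F1 (mm n (mm n ?D1 (Ft' s)) (mm n (dg (Gt' s)) (mm n (mm n (Et' s) ?D2) ?E2)))"
    by (simp only: mm_assoc)
  also have "mdm n ?J \<dots> (mm n ?F1 (mm n (mm n (Cm s) ?D1) (mm n (dg (Gt' s)) (mm n (mm n ?D2 (Dm s)) ?E2))))"
    by (intro ZF.mdm_mm ZF.mdm_refl conjC conjD)
  also have "mm n ?F1 (mm n (mm n (Cm s) ?D1) (mm n (dg (Gt' s)) (mm n (mm n ?D2 (Dm s)) ?E2)))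
      = mm n (mm n ?F1 (Cm s)) (mm n (mm n ?D1 (mm n (dg (Gt' s)) ?D2)) (mm n (Dm s) ?E2))"
    by (simp only: mm_assoc)
  also have "mdm n ?J \<dots> (mm n (Fn s) (mm n (dg (Gn s)) (En s)))"
    by (intro ZF.mdm_mm mdm_eqI[OF Z.ridl_flsI]) (simp_all add: FC_eq DE_eq GGG_eq)
  also have "mm n (Fn s) (mm n (dg (Gn s)) (En s)) = mm n (mm n (Fn s) (dg (Gn s))) (En s)"
    by (simp only: mm_assoc)
  finally have "mdm n ?J (mm n ?F1 (mm n ?D1 (mm n (M s) (mm n ?D2 ?E2)))) (mm n (mm n (Fn s) (dg (Gn s))) (En s))" .
  then have "md ?J (TD s i j) (mm n (mm n (Fn s) (dg (Gn s))) (En s) i j)"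
    using ij unfolding e1 mdm_def by blast
  then show ?thesis using gauss_form[OF lower1_Fn upper1_En ij] by simp
qed

end


lemma (in ridl) inv_prod:
  assumes "md I (a * x) 1" "md I (x * a) 1" "md I (b * y) 1" "md I (y * b) 1"
  shows "md I ((a * b) * (y * x)) 1" "md I ((y * x) * (a * b)) 1"
proof -
  have "(a * b) * (y * x) = a * (b * y) * x" by (simp add: mult.assoc)
  also have "md I \<dots> (a * 1 * x)" by (intro md_multl md_multr assms(3))
  also have "a * 1 * x = a * x" by simp
  also have "md I \<dots> 1" by (rule assms(1))
  finally show "md I ((a * b) * (y * x)) 1" .
  have "(y * x) * (a * b) = y * (x * a) * b" by (simp add: mult.assoc)
  also have "md I \<dots> (y * 1 * b)" by (intro md_multl md_multr assms(2))
  also have "y * 1 * b = y * b" by simp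
  also have "md I \<dots> 1" by (rule assms(4))
  finally show "md I ((y * x) * (a * b)) 1" .
qed

context main
begin

interpretation Z: ridl Z by (rule Z)
interpretation ZF: ridl "flsI Z" by (rule Z.ridl_flsI)

abbreviation "cpB \<equiv> (\<lambda>i. cp1 i + cp2 i)"
abbreviation "cmB \<equiv> (\<lambda>i. cm1 i + cm2 i)"

lemma ccB: "cc cpB cmB s l = cB s l" by (simp add: cc_def cB_def)

definition NN :: "int \<Rightarrow> int" where "NN m = \<bar>m\<bar> + NB"

definition vphi :: "gen \<Rightarrow> 'a" where
  "vphi x = (case x of
     TG s i j m \<Rightarrow> (\<Sum>k\<in>{1..n}. \<Sum>r\<in>{- NN m..NN m}. w1 (TG s i k r) * w2 (TG s k j (m - r)))
   | FG i l m \<Rightarrow> Fn (0 < m) i l $$ sg (0 < m) m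
   | EG l j m \<Rightarrow> En (0 \<le> m) l j $$ sg (0 \<le> m) m
   | GG s l m \<Rightarrow> Gn s l $$ sg s m
   | GI s l \<Rightarrow> w2 (GI s l) * w1 (GI s l))"

lemma vphi_TG: "i \<in> {1..n} \<Longrightarrow> j \<in> {1..n} \<Longrightarrow> md Z (vphi (TG s i j m)) (TD s i j $$ sg s m)"
  using window[where N = "NN m" and m = m and s = s] unfolding vphi_def by (simp add: NN_def)

lemma Fser_vphi: "1 \<le> l \<Longrightarrow> i \<le> n \<Longrightarrow> Fser vphi s i l = Fn s i l"
proof (rule fls_eqI)
  fix m assume l: "1 \<le> l" and i: "i \<le> n"
  show "Fser vphi s i l $$ m = Fn s i l $$ m"
  proof (cases "l < i")
    case True
    show ?thesis
    proof (cases "0 \<le> m \<and> (s \<longrightarrow> 0 < m)")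
      case True2: True
      have "(0 < sg s m) = s" using True2 by (cases s) auto
      then show ?thesis using True True2 by (simp add: Fser_nth vphi_def)
    next
      case False
      have "lowb (Fn s i l) (dF s)" by (rule Fn_low) (use l i True in auto)
      moreover have "m < dF s" using False by (cases s) (auto simp: dF_def)
      ultimately have "Fn s i l $$ m = 0" by (simp add: lowb_def)
      moreover have "Fser vphi s i l $$ m = 0" unfolding Fser_nth using False True by auto
      ultimately show ?thesis by simp
    qed
  next
    case False
    then show ?thesis by (cases "l = i") (auto simp: Fser_nth Fn_def)
  qed
qed

lemma Eser_vphi: "1 \<le> l \<Longrightarrow> j \<le> n \<Longrightarrow> Eser vphi s l j = En s l j"
proof (rule fls_eqI)
  fix m assume l: "1 \<le> l" and j: "j \<le> n"
  show "Eser vphi s l j $$ m = En s l j $$ m"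
  proof (cases "l < j")
    case True
    show ?thesis
    proof (cases "0 \<le> m \<and> (\<not> s \<longrightarrow> 0 < m)")
      case True2: True
      have "(0 \<le> sg s m) = s" using True2 by (cases s) auto
      then show ?thesis using True True2 by (simp add: Eser_nth vphi_def)
    next
      case False
      have "lowb (En s l j) (dE s)" by (rule En_low) (use l j True in auto)
      moreover have "m < dE s" using False by (cases s) (auto simp: dE_def)
      ultimately have "En s l j $$ m = 0" by (simp add: lowb_def)
      moreover have "Eser vphi s l j $$ m = 0" unfolding Eser_nth using False True by auto
      ultimately show ?thesis by simp
    qed
  next
    case False
    then show ?thesis by (cases "l = j") (auto simp: Eser_nth En_def)
  qed
qed

lemma Gser_vphi: "l \<in> {1..n} \<Longrightarrow> Gser cpB cmB vphi s l = Gn s l"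
proof (rule fls_eqI)
  fix m assume l: "l \<in> {1..n}"
  show "Gser cpB cmB vphi s l $$ m = Gn s l $$ m"
    using Gn_low[OF l, of s] by (auto simp: Gser_nth ccB vphi_def lowb_def)
qed

lemma gsum_vphi: "i \<in> {1..n} \<Longrightarrow> j \<in> {1..n} \<Longrightarrow>
   gsum (Fser vphi s) (Gser cpB cmB vphi s) (Eser vphi s) i j = gsum (Fn s) (Gn s) (En s) i j"
  unfolding gsum_def by (intro sum.cong HOL.refl) (simp add: Fser_vphi Eser_vphi Gser_vphi)

lemma vphi_inv: "l \<in> {1..n} \<Longrightarrow>
   md Z (Gn s l $$ (- cB s l) * vphi (GI s l)) 1 \<and> md Z (vphi (GI s l) * Gn s l $$ (- cB s l)) 1"
  using Z.inv_prod[of "A1.lead s l" "w1 (GI s l)" "A2.lead s l" "w2 (GI s l)"] A1.inv_rel A2.inv_rel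
  by (simp add: Gn_lead vphi_def)

lemma vphi_models:
  assumes "(a, b) \<in> rtt_rels n cpB cmB"
  shows "md Z (ev sc vphi a) (ev sc vphi b)"
  using assms unfolding rtt_rels_def
proof (elim UnE CollectE exE conjE)
  fix s s' i k j l a' b'
  assume e: "(a, b) = (rtt_lhs n s s' i k j l a' b', rtt_rhs n s s' i k j l a' b')"
    and idx: "i \<in> {1..n}" "k \<in> {1..n}" "j \<in> {1..n}" "l \<in> {1..n}"
  have X: "md Z (vphi (TG s p j m)) (Xof TD s p j m)" if "p \<in> {1..n}" "j \<in> {1..n}" for s p j m
    using vphi_TG[OF that] by (simp add: Xof_def)
  have "md Z (Lf sc n (\<lambda>s i j m. vphi (TG s i j m)) s s' i k j l a' b') (Lf sc n (Xof TD) s s' i k j l a' b')"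
    by (rule Z.Lf_md[OF X]) (use idx in auto)
  also have "md Z \<dots> (Rf sc n (Xof TD) s s' i k j l a' b')" by (rule TD_rtt[OF idx])
  also have "md Z \<dots> (Rf sc n (\<lambda>s i j m. vphi (TG s i j m)) s s' i k j l a' b')"
    by (rule Z.Rf_md[OF Z.md_sym[OF X]]) (use idx in auto)
  finally show ?thesis using e by (simp add: ev_rtt_lhs[OF sc] ev_rtt_rhs[OF sc])
next
  fix s i j m
  assume e: "(a, b) = (Gen (TG s i j m), gauss_coeff cpB cmB s i j m)" and ij: "i \<in> {1..n}" "j \<in> {1..n}"
  have "md Z (vphi (TG s i j m)) (TD s i j $$ sg s m)" by (rule vphi_TG[OF ij])
  also have "md Z \<dots> (gsum (Fn s) (Gn s) (En s) i j $$ sg s m)"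
    using TD_gauss[OF ij, of s] by (simp add: md_flsI)
  finally show ?thesis using e ij by (simp add: ev_gauss[OF sc] gsum_vphi)
next
  fix i assume e: "(a, b) = (Mul (Gen (GG True i (- cpB i))) (Gen (GI True i)), Sc 1)" and i: "i \<in> {1..n}"
  show ?thesis using e vphi_inv[OF i, of True] schomD(4)[OF sc]
    by (simp add: vphi_def cB_def cc_def)
next
  fix i assume e: "(a, b) = (Mul (Gen (GI True i)) (Gen (GG True i (- cpB i))), Sc 1)" and i: "i \<in> {1..n}"
  show ?thesis using e vphi_inv[OF i, of True] schomD(4)[OF sc]
    by (simp add: vphi_def cB_def cc_def)
next
  fix i assume e: "(a, b) = (Mul (Gen (GG False i (cmB i))) (Gen (GI False i)), Sc 1)" and i: "i \<in> {1..n}"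
  show ?thesis using e vphi_inv[OF i, of False] schomD(4)[OF sc]
    by (simp add: vphi_def cB_def cc_def)
next
  fix i assume e: "(a, b) = (Mul (Gen (GI False i)) (Gen (GG False i (cmB i))), Sc 1)" and i: "i \<in> {1..n}"
  show ?thesis using e vphi_inv[OF i, of False] schomD(4)[OF sc]
    by (simp add: vphi_def cB_def cc_def)
qed

lemma vphi_unique:
  assumes V: "\<And>a b. (a, b) \<in> rtt_rels n cpB cmB \<Longrightarrow> md Z (ev sc v a) (ev sc v b)"
    and VT: "\<And>s i j m. i \<in> {1..n} \<Longrightarrow> j \<in> {1..n} \<Longrightarrow> md Z (v (TG s i j m)) (vphi (TG s i j m))"
    and x: "x \<in> rtt_gens n cpB cmB"
  shows "md Z (v x) (vphi x)"
proof -
  interpret AV: alg1 n cpB cmB Z sc v by (rule alg1.intro[OF Z sc]) (rule V)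
  have LDU: "md (flsI Z) (Gser cpB cmB v s k) (Gn s k) \<and>
      (\<forall>i\<in>{k<..n}. md (flsI Z) (Fser v s i k) (Fn s i k) \<and> md (flsI Z) (Eser v s k i) (En s k i))"
    if k: "k \<in> {1..n}" for s k
  proof (rule ldu_unique[OF Z.ridl_flsI lower1_Fser lower1_Fn upper1_Eser upper1_En _ _ k])
    fix l assume l: "l \<in> {1..n}"
    have "md Z (vphi (GI s l) * Gn s l $$ (- cB s l)) 1" "md Z (Gn s l $$ (- cB s l) * vphi (GI s l)) 1"
      using vphi_inv[OF l] by auto
    from Z.finv_both[OF Gn_low[OF l] this]
    show "\<exists>h. md (flsI Z) (Gn s l * h) 1 \<and> md (flsI Z) (h * Gn s l) 1" by blast
  next
    fix i j assume ij: "i \<in> {1..n}" "j \<in> {1..n}"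
    show "md (flsI Z) (gsum (Fser v s) (Gser cpB cmB v s) (Eser v s) i j) (gsum (Fn s) (Gn s) (En s) i j)"
      unfolding md_flsI
    proof
      fix m
      have "md Z (gsum (Fser v s) (Gser cpB cmB v s) (Eser v s) i j $$ m) (v (TG s i j (sg s m)))"
        using AV.tg[OF ij, of s "sg s m"] by (simp add: AV.T_def Z.md_sym)
      also have "md Z \<dots> (vphi (TG s i j (sg s m)))" by (rule VT[OF ij])
      also have "md Z \<dots> (TD s i j $$ m)" using vphi_TG[OF ij, of s "sg s m"] by simp
      also have "md Z \<dots> (gsum (Fn s) (Gn s) (En s) i j $$ m)"
        using TD_gauss[OF ij, of s] by (simp add: md_flsI)
      finally show "md Z (gsum (Fser v s) (Gser cpB cmB v s) (Eser v s) i j $$ m) (gsum (Fn s) (Gn s) (En s) i j $$ m)" .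
    qed
  qed
  have GG: "md Z (v (GG s i (sg s m))) (Gn s i $$ m)" if i: "i \<in> {1..n}" and m: "- cB s i \<le> m" for s i m
  proof -
    have "md Z (Gser cpB cmB v s i $$ m) (Gn s i $$ m)" using LDU[OF i, of s] by (simp add: md_flsI)
    then show ?thesis using m by (simp add: Gser_nth ccB)
  qed
  show ?thesis
    using x unfolding rtt_gens_def
  proof (elim UnE CollectE exE conjE)
    fix s i j m assume "x = TG s i j m" "i \<in> {1..n}" "j \<in> {1..n}"
    then show ?thesis using VT by simp
  next
    fix i j r assume e: "x = EG i j r" and ij: "1 \<le> i" "i < j" "j \<le> n"
    let ?s = "0 \<le> r"
    have "md (flsI Z) (Eser v ?s i j) (En ?s i j)" using LDU[of i ?s] ij by auto
    then have "md Z (Eser v ?s i j $$ sg ?s r) (En ?s i j $$ sg ?s r)" by (simp add: md_flsI)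
    moreover have "Eser v ?s i j $$ sg ?s r = v (EG i j r)" using ij by (auto simp: Eser_nth sg_def)
    ultimately show ?thesis using e by (simp add: vphi_def)
  next
    fix j i r assume e: "x = FG j i r" and ij: "1 \<le> i" "i < j" "j \<le> n"
    let ?s = "0 < r"
    have "md (flsI Z) (Fser v ?s j i) (Fn ?s j i)" using LDU[of i ?s] ij by auto
    then have "md Z (Fser v ?s j i $$ sg ?s r) (Fn ?s j i $$ sg ?s r)" by (simp add: md_flsI)
    moreover have "Fser v ?s j i $$ sg ?s r = v (FG j i r)" using ij by (auto simp: Fser_nth sg_def)
    ultimately show ?thesis using e by (simp add: vphi_def)
  next
    fix i m assume e: "x = GG True i m" and i: "i \<in> {1..n}" and m: "- cpB i \<le> m"
    show ?thesis using GG[where s=True and i=i and m=m] e i m by (simp add: vphi_def cB_def cc_def)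
  next
    fix i m assume e: "x = GG False i m" and i: "i \<in> {1..n}" and m: "m \<le> cmB i"
    show ?thesis using GG[where s=False and i=i and m="- m"] e i m by (simp add: vphi_def cB_def cc_def)
  next
    fix s i assume e: "x = GI s i" and iin: "i \<in> {1..n}"
    let ?g = "Gn s i $$ (- cB s i)" and ?y = "vphi (GI s i)" and ?u = "v (GI s i)"
    have lv: "md Z (AV.lead s i) ?g"
      unfolding AV.lead_def using GG[OF iin, where s=s and m="- cB s i"] by (simp add: ccB)
    have u1: "md Z (AV.lead s i * ?u) 1" "md Z (?u * AV.lead s i) 1" using AV.inv_rel[OF iin] by auto
    have y1: "md Z (?y * ?g) 1" using vphi_inv[OF iin] by auto
    have "md Z ?u (1 * ?u)" by simp
    also have "md Z \<dots> ((?y * ?g) * ?u)" by (rule Z.md_multr[OF Z.md_sym[OF y1]])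
    also have "(?y * ?g) * ?u = ?y * (?g * ?u)" by (simp add: mult.assoc)
    also have "md Z \<dots> (?y * (AV.lead s i * ?u))" by (intro Z.md_multl Z.md_multr Z.md_sym[OF lv])
    also have "md Z \<dots> (?y * 1)" by (rule Z.md_multl[OF u1(1)])
    finally show ?thesis using e by simp
  qed
qed

end


lemma abs_rep_falg: "abs_falg (rep_falg x) = x"
  by (rule Quotient3_abs_rep[OF Quotient3_falg])

lemma gens_esum: "gens (esum xs) = \<Union> (gens ` set xs)"
  by (induction xs) (auto simp: esum_def)

lemma gens_map: "gens (map_fexpr f a) = f ` gens a"
  by (induction a) auto

lemma gens_fco: "1 \<le> l \<Longrightarrow> i \<le> n \<Longrightarrow> gens (fco s i l a) \<subseteq> rtt_gens n cp cm"
  by (auto simp: fco_def intro: FG_in)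
lemma gens_gco: "1 \<le> l \<Longrightarrow> l \<le> n \<Longrightarrow> gens (gco cp cm s l b) \<subseteq> rtt_gens n cp cm"
  by (auto simp: gco_def intro: GGT_in GGF_in)
lemma gens_eco: "1 \<le> j \<Longrightarrow> j \<le> n \<Longrightarrow> 1 \<le> l \<Longrightarrow> gens (eco s l j c) \<subseteq> rtt_gens n cp cm"
  by (auto simp: eco_def intro: EG_in)

lemma gens_rtt_lhs: "j \<in> {1..n} \<Longrightarrow> l \<in> {1..n} \<Longrightarrow> gens (rtt_lhs n s s' i k j l a b) \<subseteq> rtt_gens n cp cm"
  unfolding rtt_lhs_def gens_esum by (auto simp: tco_def intro: TG_in)
lemma gens_rtt_rhs: "i \<in> {1..n} \<Longrightarrow> k \<in> {1..n} \<Longrightarrow> gens (rtt_rhs n s s' i k j l a b) \<subseteq> rtt_gens n cp cm"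
  unfolding rtt_rhs_def gens_esum by (auto simp: tco_def intro: TG_in)
lemma gens_gauss: "i \<in> {1..n} \<Longrightarrow> j \<in> {1..n} \<Longrightarrow> gens (gauss_coeff cp cm s i j m) \<subseteq> rtt_gens n cp cm"
proof -
  assume ij: "i \<in> {1..n}" "j \<in> {1..n}"
  have h: "gens (Mul (Mul (fco s i l a) (gco cp cm s l b)) (eco s l j c)) \<subseteq> rtt_gens n cp cm"
    if "l \<in> {1..<Suc (min i j)}" for l a b c
  proof -
    have "gens (fco s i l a) \<subseteq> rtt_gens n cp cm" by (rule gens_fco) (use ij that in auto)
    moreover have "gens (gco cp cm s l b) \<subseteq> rtt_gens n cp cm" by (rule gens_gco) (use ij that in auto)
    moreover have "gens (eco s l j c) \<subseteq> rtt_gens n cp cm" by (rule gens_eco) (use ij that in auto)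
    ultimately show ?thesis by simp
  qed
  show ?thesis unfolding gauss_coeff_def gens_esum
  proof (rule UN_least)
    fix e assume "e \<in> set [Mul (Mul (fco s i l a) (gco cp cm s l b)) (eco s l j (m - a - b)).
        l \<leftarrow> [1..<Suc (min i j)],
        a \<leftarrow> [- (\<bar>m\<bar> + \<bar>cp l\<bar> + \<bar>cm l\<bar>) .. \<bar>m\<bar> + \<bar>cp l\<bar> + \<bar>cm l\<bar>],
        b \<leftarrow> [- (\<bar>m\<bar> + \<bar>cp l\<bar> + \<bar>cm l\<bar>) .. \<bar>m\<bar> + \<bar>cp l\<bar> + \<bar>cm l\<bar>]]"
    then obtain l a b where "l \<in> {1..<Suc (min i j)}" "e = Mul (Mul (fco s i l a) (gco cp cm s l b)) (eco s l j (m - a - b))"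
      by (auto simp del: upt_Suc)
    then show "gens e \<subseteq> rtt_gens n cp cm" using h by blast
  qed
qed

lemma rels_gens:
  assumes "(a, b) \<in> rtt_rels n cp cm"
  shows "gens a \<subseteq> rtt_gens n cp cm \<and> gens b \<subseteq> rtt_gens n cp cm"
  using assms unfolding rtt_rels_def
proof (elim UnE CollectE exE conjE)
  fix s s' i k j l a' b'
  assume "(a, b) = (rtt_lhs n s s' i k j l a' b', rtt_rhs n s s' i k j l a' b')"
    "i \<in> {1..n}" "k \<in> {1..n}" "j \<in> {1..n}" "l \<in> {1..n}"
  then show ?thesis using gens_rtt_lhs gens_rtt_rhs by simp
next
  fix s i j m assume "(a, b) = (Gen (TG s i j m), gauss_coeff cp cm s i j m)" "i \<in> {1..n}" "j \<in> {1..n}"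
  then show ?thesis using gens_gauss TG_in by simp
qed (auto intro: GGT_in GGF_in GI_in)

lemma tens_gens_rel:
  assumes "(a, b) \<in> tens_rels X1 RR1 X2 RR2"
    and h1: "\<And>a b. (a, b) \<in> RR1 \<Longrightarrow> gens a \<subseteq> X1 \<and> gens b \<subseteq> X1"
    and h2: "\<And>a b. (a, b) \<in> RR2 \<Longrightarrow> gens a \<subseteq> X2 \<and> gens b \<subseteq> X2"
  shows "gens a \<subseteq> tens_gens X1 X2 \<and> gens b \<subseteq> tens_gens X1 X2"
  using assms(1) unfolding tens_rels_def tens_gens_def
proof (elim UnE imageE CollectE exE conjE)
  fix p assume p: "p \<in> RR1" "(a, b) = (case p of (a, b) \<Rightarrow> (map_fexpr Inl a, map_fexpr Inl b))"
  obtain a' b' where pp: "p = (a', b')" by (cases p)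
  have "gens a' \<subseteq> X1" "gens b' \<subseteq> X1" using h1[of a' b'] p(1) pp by auto
  then show "gens a \<subseteq> Inl ` X1 \<union> Inr ` X2 \<and> gens b \<subseteq> Inl ` X1 \<union> Inr ` X2"
    using p(2) pp by (auto simp: gens_map)
next
  fix p assume p: "p \<in> RR2" "(a, b) = (case p of (a, b) \<Rightarrow> (map_fexpr Inr a, map_fexpr Inr b))"
  obtain a' b' where pp: "p = (a', b')" by (cases p)
  have "gens a' \<subseteq> X2" "gens b' \<subseteq> X2" using h2[of a' b'] p(1) pp by auto
  then show "gens a \<subseteq> Inl ` X1 \<union> Inr ` X2 \<and> gens b \<subseteq> Inl ` X1 \<union> Inr ` X2"
    using p(2) pp by (auto simp: gens_map)
qed auto

lemma kap_sum: "kap Y (sum f A) = (\<Sum>x\<in>A. kap Y (f x))"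
  by (induction A rule: infinite_finite_induct) (auto simp: kap_add zero_falg_def kap_abs)

lemma ev_delta_esum:
  "ev scalF genF (esum [Mul (Gen (Inl (TG s i k r))) (Gen (Inr (TG s k j (m - r)))).
                    k \<leftarrow> [1..<Suc n], r \<leftarrow> [-N..N]])
   = (\<Sum>k\<in>{1..n}. \<Sum>r\<in>{-N..N}. genF (Inl (TG s i k r)) * genF (Inr (TG s k j (m - r))))"
proof -
  have z: "scalF 0 = 0" by (rule schomD(3)[OF schom_scalF])
  show ?thesis unfolding ev_esum[of scalF, OF z]
    by (simp add: sum_list_concat' map_concat comp_def sum_list_map_upt sum_list_map_upto
        atLeastLessThanSuc_atLeastAtMost del: upt_Suc)
qed


theorem proposition3p34:
  fixes n :: nat and cp1 cm1 cp2 cm2 :: "nat \<Rightarrow> int"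
  assumes "2 \<le> n"
    and "dominant n cp1" and "dominant n cm1" and "dominant n cp2" and "dominant n cm2"
  shows "\<exists>\<phi>. is_hom (rtt_gens n (\<lambda>i. cp1 i + cp2 i) (\<lambda>i. cm1 i + cm2 i))
                    (rtt_rels n (\<lambda>i. cp1 i + cp2 i) (\<lambda>i. cm1 i + cm2 i))
                    (tens_gens (rtt_gens n cp1 cm1) (rtt_gens n cp2 cm2))
                    (tens_rels (rtt_gens n cp1 cm1) (rtt_rels n cp1 cm1)
                               (rtt_gens n cp2 cm2) (rtt_rels n cp2 cm2)) \<phi>
           \<and> delta_cond n (tens_rels (rtt_gens n cp1 cm1) (rtt_rels n cp1 cm1)
                               (rtt_gens n cp2 cm2) (rtt_rels n cp2 cm2)) \<phi>
           \<and> (\<forall>\<psi>. is_hom (rtt_gens n (\<lambda>i. cp1 i + cp2 i) (\<lambda>i. cm1 i + cm2 i))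
                    (rtt_rels n (\<lambda>i. cp1 i + cp2 i) (\<lambda>i. cm1 i + cm2 i))
                    (tens_gens (rtt_gens n cp1 cm1) (rtt_gens n cp2 cm2))
                    (tens_rels (rtt_gens n cp1 cm1) (rtt_rels n cp1 cm1)
                               (rtt_gens n cp2 cm2) (rtt_rels n cp2 cm2)) \<psi>
                 \<and> delta_cond n (tens_rels (rtt_gens n cp1 cm1) (rtt_rels n cp1 cm1)
                               (rtt_gens n cp2 cm2) (rtt_rels n cp2 cm2)) \<psi>
                 \<longrightarrow> (\<forall>x\<in>rtt_gens n (\<lambda>i. cp1 i + cp2 i) (\<lambda>i. cm1 i + cm2 i).
                        eqv (tens_rels (rtt_gens n cp1 cm1) (rtt_rels n cp1 cm1)
                               (rtt_gens n cp2 cm2) (rtt_rels n cp2 cm2)) (\<psi> x) (\<phi> x)))"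
proof -
  let ?X1 = "rtt_gens n cp1 cm1" and ?X2 = "rtt_gens n cp2 cm2"
  let ?R1 = "rtt_rels n cp1 cm1" and ?R2 = "rtt_rels n cp2 cm2"
  let ?X0 = "rtt_gens n (\<lambda>i. cp1 i + cp2 i) (\<lambda>i. cm1 i + cm2 i)"
  let ?R0 = "rtt_rels n (\<lambda>i. cp1 i + cp2 i) (\<lambda>i. cm1 i + cm2 i)"
  let ?Y = "tens_gens ?X1 ?X2" and ?S = "tens_rels ?X1 ?R1 ?X2 ?R2"
  let ?w1 = "\<lambda>x. genF (Inl x) :: (gen + gen) falg" and ?w2 = "\<lambda>x. genF (Inr x) :: (gen + gen) falg"
  let ?Z = "ZS ?S"
  have SY: "gens a \<subseteq> ?Y \<and> gens b \<subseteq> ?Y" if "(a, b) \<in> ?S" for a b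
    by (rule tens_gens_rel[OF that]) (auto dest: rels_gens)
  have inS1: "(map_fexpr Inl a, map_fexpr Inl b) \<in> ?S" if "(a, b) \<in> ?R1" for a b
  proof -
    have "(map_fexpr Inl a, map_fexpr Inl b) \<in> (\<lambda>(a, b). (map_fexpr Inl a, map_fexpr Inl b)) ` ?R1"
      using that by (rule rev_image_eqI) simp
    then show ?thesis unfolding tens_rels_def by (intro UnI1)
  qed
  have inS2: "(map_fexpr Inr a, map_fexpr Inr b) \<in> ?S" if "(a, b) \<in> ?R2" for a b
  proof -
    have "(map_fexpr Inr a, map_fexpr Inr b) \<in> (\<lambda>(a, b). (map_fexpr Inr a, map_fexpr Inr b)) ` ?R2"
      using that by (rule rev_image_eqI) simp
    then show ?thesis unfolding tens_rels_def by (intro UnI1 UnI2)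
  qed
  have inS3: "(Mul (Gen (Inl x)) (Gen (Inr y)), Mul (Gen (Inr y)) (Gen (Inl x))) \<in> ?S"
    if "x \<in> ?X1" "y \<in> ?X2" for x y
    unfolding tens_rels_def using that by (intro UnI2) blast
  have absmap: "abs_falg (map_fexpr f a) = ev scalF (\<lambda>x. genF (f x)) a" for f and a :: "gen fexpr"
    by (simp add: abs_ev ev_map)
  interpret MN: main n cp1 cm1 cp2 cm2 ?Z scalF ?w1 ?w2
  proof (rule main.intro[OF ridl_ZS schom_scalF assms(2-5)])
    fix a b assume "(a, b) \<in> ?R1"
    then have "eqv ?S (map_fexpr Inl a) (map_fexpr Inl b)" by (intro eqv.rel inS1)
    then show "md ?Z (ev scalF ?w1 a) (ev scalF ?w1 b)" by (simp add: md_abs_iff[symmetric] absmap)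
  next
    fix a b assume "(a, b) \<in> ?R2"
    then have "eqv ?S (map_fexpr Inr a) (map_fexpr Inr b)" by (intro eqv.rel inS2)
    then show "md ?Z (ev scalF ?w2 a) (ev scalF ?w2 b)" by (simp add: md_abs_iff[symmetric] absmap)
  next
    fix x y assume "x \<in> ?X1" "y \<in> ?X2"
    then have "eqv ?S (Mul (Gen (Inl x)) (Gen (Inr y))) (Mul (Gen (Inr y)) (Gen (Inl x)))"
      by (intro eqv.rel inS3)
    then show "md ?Z (?w1 x * ?w2 y) (?w2 y * ?w1 x)"
      by (simp add: md_abs_iff[symmetric] genF_def times_falg.abs_eq)
  qed
  define \<phi> where "\<phi> x = subst (clean ?Y) (rep_falg (MN.vphi x))" for x
  have absphi: "abs_falg (\<phi> x) = kap ?Y (MN.vphi x)" for x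
    unfolding \<phi>_def using kap_abs[of ?Y "rep_falg (MN.vphi x)"] by (simp add: abs_rep_falg)
  have gphi: "gens (\<phi> x) \<subseteq> ?Y" for x unfolding \<phi>_def by (rule gens_subst_clean)
  have kev: "ev scalF (\<lambda>x. kap ?Y (v x)) a = kap ?Y (ev scalF v a)" for v and a :: "gen fexpr"
    by (rule ev_hom) (simp_all add: kap_add kap_mult kap_uminus kap_scalF)
  have abs_subst: "abs_falg (subst f a) = ev scalF (\<lambda>x. abs_falg (f x)) a" for f and a :: "gen fexpr"
    by (simp add: abs_ev ev_subst)
  have kmd: "md ?Z (kap ?Y x) (kap ?Y y)" if "md ?Z x y" for x y
    by (rule kap_md[OF SY that])
  have hom: "is_hom ?X0 ?R0 ?Y ?S \<phi>"
    unfolding is_hom_def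
  proof (intro conjI ballI)
    fix x show "gens (\<phi> x) \<subseteq> ?Y" by (rule gphi)
  next
    fix p assume p: "p \<in> ?R0"
    obtain a b where ab: "p = (a, b)" by (cases p)
    have "md ?Z (kap ?Y (ev scalF MN.vphi a)) (kap ?Y (ev scalF MN.vphi b))"
      by (rule kmd[OF MN.vphi_models]) (use p ab in simp)
    then have "eqv ?S (subst \<phi> a) (subst \<phi> b)"
      by (simp add: md_abs_iff[symmetric] abs_subst absphi kev)
    then show "case p of (a, b) \<Rightarrow> eqv ?S (subst \<phi> a) (subst \<phi> b)" using ab by simp
  qed
  have kfix1: "kap ?Y (?w1 x) = ?w1 x" if "x \<in> ?X1" for x
    by (rule kap_genF) (use that in \<open>simp add: tens_gens_def\<close>)
  have kfix2: "kap ?Y (?w2 x) = ?w2 x" if "x \<in> ?X2" for x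
    by (rule kap_genF) (use that in \<open>simp add: tens_gens_def\<close>)
  have vTG: "kap ?Y (MN.vphi (TG s i j m)) = MN.vphi (TG s i j m)" if ij: "i \<in> {1..n}" "j \<in> {1..n}" for s i j m
    unfolding MN.vphi_def using ij by (simp add: kap_sum kap_mult kfix1 kfix2 TG_in)
  have dwin: "md ?Z (abs_falg (esum [Mul (Gen (Inl (TG s i k r))) (Gen (Inr (TG s k j (m - r)))).
                    k \<leftarrow> [1..<Suc n], r \<leftarrow> [-N..N]])) (MN.vphi (TG s i j m))"
    if ij: "i \<in> {1..n}" "j \<in> {1..n}" and N: "MN.NN m \<le> N" for s i j m N
  proof -
    interpret Z: ridl ?Z by (rule ridl_ZS)
    have "md ?Z (abs_falg (esum [Mul (Gen (Inl (TG s i k r))) (Gen (Inr (TG s k j (m - r)))).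
                    k \<leftarrow> [1..<Suc n], r \<leftarrow> [-N..N]])) (MN.TD s i j $$ sg s m)"
      unfolding abs_ev ev_delta_esum by (rule MN.window[OF ij]) (use N in \<open>simp add: MN.NN_def\<close>)
    also have "md ?Z \<dots> (MN.vphi (TG s i j m))" by (rule Z.md_sym[OF MN.vphi_TG[OF ij]])
    finally show ?thesis .
  qed
  have delta: "delta_cond n ?S \<phi>"
    unfolding delta_cond_def
  proof (intro allI impI)
    fix s i j m assume ij: "i \<in> {1..n} \<and> j \<in> {1..n}"
    show "\<exists>N0. \<forall>N\<ge>N0. eqv ?S (\<phi> (TG s i j m))
        (esum [Mul (Gen (Inl (TG s i k r))) (Gen (Inr (TG s k j (m - r)))). k \<leftarrow> [1..<Suc n], r \<leftarrow> [-N..N]])"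
    proof (intro exI allI impI)
      interpret Z: ridl ?Z by (rule ridl_ZS)
      fix N assume N: "MN.NN m \<le> N"
      have "md ?Z (abs_falg (\<phi> (TG s i j m)))
          (abs_falg (esum [Mul (Gen (Inl (TG s i k r))) (Gen (Inr (TG s k j (m - r)))). k \<leftarrow> [1..<Suc n], r \<leftarrow> [-N..N]]))"
        unfolding absphi vTG[OF conjunct1[OF ij] conjunct2[OF ij]]
        by (rule Z.md_sym[OF dwin]) (use ij N in auto)
      then show "eqv ?S (\<phi> (TG s i j m))
          (esum [Mul (Gen (Inl (TG s i k r))) (Gen (Inr (TG s k j (m - r)))). k \<leftarrow> [1..<Suc n], r \<leftarrow> [-N..N]])"
        by (simp add: md_abs_iff)
    qed
  qed
  have uniq: "\<forall>x\<in>?X0. eqv ?S (\<psi> x) (\<phi> x)" if H: "is_hom ?X0 ?R0 ?Y ?S \<psi>" and D: "delta_cond n ?S \<psi>" for \<psi>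
  proof
    interpret Z: ridl ?Z by (rule ridl_ZS)
    fix x assume x: "x \<in> ?X0"
    let ?v = "\<lambda>x. abs_falg (\<psi> x)"
    have V: "md ?Z (ev scalF ?v a) (ev scalF ?v b)" if "(a, b) \<in> ?R0" for a b
    proof -
      have "eqv ?S (subst \<psi> a) (subst \<psi> b)" using H that unfolding is_hom_def by fast
      then show ?thesis by (simp add: md_abs_iff[symmetric] abs_subst)
    qed
    have VT: "md ?Z (?v (TG s i j m)) (MN.vphi (TG s i j m))" if ij: "i \<in> {1..n}" "j \<in> {1..n}" for s i j m
    proof -
      obtain N0 where N0: "\<forall>N\<ge>N0. eqv ?S (\<psi> (TG s i j m))
          (esum [Mul (Gen (Inl (TG s i k r))) (Gen (Inr (TG s k j (m - r)))). k \<leftarrow> [1..<Suc n], r \<leftarrow> [-N..N]])"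
        using D ij unfolding delta_cond_def by blast
      let ?N = "max N0 (MN.NN m)"
      have "md ?Z (?v (TG s i j m))
          (abs_falg (esum [Mul (Gen (Inl (TG s i k r))) (Gen (Inr (TG s k j (m - r)))). k \<leftarrow> [1..<Suc n], r \<leftarrow> [-?N..?N]]))"
        using N0 by (simp add: md_abs_iff)
      also have "md ?Z \<dots> (MN.vphi (TG s i j m))" by (rule dwin[OF ij]) simp
      finally show ?thesis .
    qed
    have "md ?Z (?v x) (MN.vphi x)" by (rule MN.vphi_unique[OF V VT x])
    then have "md ?Z (kap ?Y (?v x)) (kap ?Y (MN.vphi x))" by (rule kmd)
    moreover have "kap ?Y (?v x) = ?v x"
      by (rule kap_abs_id) (use H x in \<open>auto simp: is_hom_def\<close>)
    ultimately have "md ?Z (abs_falg (\<psi> x)) (abs_falg (\<phi> x))" by (simp add: absphi)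
    then show "eqv ?S (\<psi> x) (\<phi> x)" by (simp add: md_abs_iff)
  qed
  show ?thesis using hom delta uniq by blast
qed


end
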